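(* Let $G$ be a finite group and $p$ a prime such that the Sylow $p$-subgroups of $G$ are cyclic of order $p^r$, and let $\mathbf 1_G$ be the trivial $\mathbb{Z}_p[G]$-lattice. If $r\ge1$, then $$v_p(C_{\theta_G}(\mathbf 1_G))=-r\Big(1-\frac{|Z_G(Q)|}{|N_G(Q)|}\Big)$$ for any non-trivial $p$-subgroup $Q$ of $G$. If $r=0$ (i.e.\ $p\nmid|G|$), then $v_p(C_{\theta_G}(\mathbf 1_G))=0$.
   Context: Artin relation: $\theta_G=[G]-\sum_H\alpha_H[H]$, where $H$ runs over representatives of conjugacy classes of cyclic subgroups, $[H]$ stands for the $G$-set $G/H$, and the $\alpha_H\in\mathbb{Q}$ are uniquely determined by $[\mathbf 1]=\sum_H\alpha_H[\mathbb{Q}[G/H]]$ in $A(\mathbb{Q}[G])$ (Artin induction). For a rational Brauer relation $\theta=\sum_K\beta_K[K]$, one has $v_p(C_\theta(\mathbf 1_G))=-\sum_K\beta_K v_p(|K|)$. This is the regulator constant $\prod_i\det(\tfrac1{|H_i|}\langle\ ,\ \rangle|_{M^{H_i}})/\prod_j\det(\tfrac1{|H'_j|}\langle\ ,\ \rangle|_{M^{H'_j}})$ at $M=\mathbb{Z}_p$ with $\langle x,y\rangle=xy$, extended linearly. $Z_G$ and $N_G$ denote the centraliser and normaliser. *)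

theory Defs
  imports "HOL-Algebra.Algebra" "HOL-Computational_Algebra.Primes"
begin

definition cyclic_subgroup :: "('a, 'b) monoid_scheme \<Rightarrow> 'a set \<Rightarrow> bool" where
  "cyclic_subgroup G H \<longleftrightarrow> (\<exists>g \<in> carrier G. H = generate G {g})"

definition sylow_subgroup :: "('a, 'b) monoid_scheme \<Rightarrow> nat \<Rightarrow> 'a set \<Rightarrow> bool" where
  "sylow_subgroup G p P \<longleftrightarrow> subgroup P G \<and> card P = p ^ multiplicity p (order G)"

definition p_subgroup :: "('a, 'b) monoid_scheme \<Rightarrow> nat \<Rightarrow> 'a set \<Rightarrow> bool" where
  "p_subgroup G p Q \<longleftrightarrow> subgroup Q G \<and> (\<exists>k. card Q = p ^ k)"

definition centralizer :: "('a, 'b) monoid_scheme \<Rightarrow> 'a set \<Rightarrow> 'a set" where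
  "centralizer G Q = {g \<in> carrier G. \<forall>q \<in> Q. g \<otimes>\<^bsub>G\<^esub> q = q \<otimes>\<^bsub>G\<^esub> g}"

definition conj_subgroups :: "('a, 'b) monoid_scheme \<Rightarrow> 'a set \<Rightarrow> 'a set \<Rightarrow> bool" where
  "conj_subgroups G H K \<longleftrightarrow> (\<exists>g \<in> carrier G. K = (\<lambda>h. g \<otimes>\<^bsub>G\<^esub> h \<otimes>\<^bsub>G\<^esub> inv\<^bsub>G\<^esub> g) ` H)"

definition left_cosets :: "('a, 'b) monoid_scheme \<Rightarrow> 'a set \<Rightarrow> 'a set set" where
  "left_cosets G H = {x <#\<^bsub>G\<^esub> H | x. x \<in> carrier G}"

definition perm_char :: "('a, 'b) monoid_scheme \<Rightarrow> 'a set \<Rightarrow> 'a \<Rightarrow> nat" where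
  "perm_char G H g = card {C \<in> left_cosets G H. g <#\<^bsub>G\<^esub> C = C}"

definition cyclic_reps :: "('a, 'b) monoid_scheme \<Rightarrow> 'a set set \<Rightarrow> bool" where
  "cyclic_reps G R \<longleftrightarrow> (\<forall>H \<in> R. cyclic_subgroup G H) \<and>
     (\<forall>K. cyclic_subgroup G K \<longrightarrow> (\<exists>!H. H \<in> R \<and> conj_subgroups G H K))"

text \<open>Artin induction data: [1] = sum_H alpha_H [Q[G/H]] in the rational representation
  ring, expressed through characters (rational representations are determined by
  their characters; the character of Q[G/H] is the permutation character).\<close>
definition artin_coeffs :: "('a, 'b) monoid_scheme \<Rightarrow> 'a set set \<Rightarrow> ('a set \<Rightarrow> rat) \<Rightarrow> bool" where
  "artin_coeffs G R \<alpha> \<longleftrightarrow> cyclic_reps G R \<and>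
     (\<forall>g \<in> carrier G. (1::rat) = (\<Sum>H\<in>R. \<alpha> H * of_nat (perm_char G H g)))"

text \<open>v_p(C_theta(1_G)) = - sum_K beta_K v_p(|K|) for theta = sum_K beta_K [K].
  For the Artin relation theta_G = [G] - sum_{H in R} alpha_H [H].\<close>
definition artin_reg_val :: "('a, 'b) monoid_scheme \<Rightarrow> nat \<Rightarrow> 'a set set \<Rightarrow> ('a set \<Rightarrow> rat) \<Rightarrow> rat" where
  "artin_reg_val G p R \<alpha> =
     - (of_nat (multiplicity p (order G)) - (\<Sum>H\<in>R. \<alpha> H * of_nat (multiplicity p (card H))))"

end

theory Submission
  imports Defs
begin

lemma card_multiples_below:
  fixes n c :: nat
  assumes "c dvd n" "c > 0"
  shows "card {i. i < n \<and> c dvd i} = n div c"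
proof -
  have "{i. i < n \<and> c dvd i} = (\<lambda>j. c * j) ` {..<n div c}"
  proof (rule Set.set_eqI, rule iffI)
    fix i assume "i \<in> {i. i < n \<and> c dvd i}"
    then obtain j where j: "i = c * j" "c * j < n" by auto
    then have "j < n div c" using assms
      by (metis dvd_mult_div_cancel mult_less_cancel1)
    then show "i \<in> (\<lambda>j. c * j) ` {..<n div c}" using j by auto
  next
    fix i assume "i \<in> (\<lambda>j. c * j) ` {..<n div c}"
    then obtain j where j: "i = c * j" "j < n div c" by auto
    then have "c * j < n" using assms
      by (metis dvd_mult_div_cancel mult_less_cancel1)
    then show "i \<in> {i. i < n \<and> c dvd i}" using j by auto
  qed
  moreover have "inj_on (\<lambda>j. c * j) {..<n div c}" using assms by (auto simp: inj_on_def)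
  ultimately show ?thesis by (simp add: card_image)
qed

lemma card_dvd_mult_below:
  fixes n M :: nat
  assumes "n > 0"
  shows "card {i. i < n \<and> n dvd i * M} = gcd n M"
proof -
  define d where "d = gcd n M"
  have d0: "d > 0" using assms by (simp add: d_def)
  define c where "c = n div d"
  have n_eq: "n = c * d" by (simp add: c_def d_def)
  define M' where "M' = M div d"
  have M_eq: "M = M' * d" by (simp add: M'_def d_def)
  have cop: "coprime c M'"
    unfolding c_def M'_def d_def using assms by (intro div_gcd_coprime) auto
  have "n dvd i * M \<longleftrightarrow> c dvd i" for i
  proof -
    have "n dvd i * M \<longleftrightarrow> c * d dvd (i * M') * d" by (simp add: n_eq M_eq mult.assoc)
    also have "\<dots> \<longleftrightarrow> c dvd i * M'" using d0 by simp
    also have "\<dots> \<longleftrightarrow> c dvd i" using cop by (simp add: coprime_dvd_mult_left_iff)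
    finally show ?thesis .
  qed
  then have "{i. i < n \<and> n dvd i * M} = {i. i < n \<and> c dvd i}" by auto
  also have "card \<dots> = n div c"
    by (rule card_multiples_below) (use n_eq assms in auto)
  also have "n div c = d" using n_eq assms by auto
  finally show ?thesis by (simp add: d_def)
qed

context group begin

lemma pow_mod_ord:
  assumes g: "g \<in> carrier G"
  shows "g [^] (k::nat) = g [^] (k mod ord g)"
proof -
  obtain q where q: "k = ord g * q + k mod ord g" by (metis div_mult_mod_eq mult.commute)
  have "int (k mod ord g) - int k = - (int (ord g) * int q)"
    using q by (metis add_diff_cancel_right' minus_diff_eq of_nat_add of_nat_mult)
  then have "int (ord g) dvd int (k mod ord g) - int k" by simp
  then have "g [^] (int k) = g [^] (int (k mod ord g))"
    using int_pow_eq[OF g, of "int k" "int (k mod ord g)"] by simp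
  then show ?thesis by (simp add: int_pow_int)
qed

lemma gen_eq_img:
  assumes fin: "finite (carrier G)" and g: "g \<in> carrier G"
  shows "generate G {g} = (\<lambda>i. g [^] i) ` {..<ord g}"
proof -
  have o: "ord g \<ge> 1" using ord_ge_1[OF fin g] .
  have "generate G {g} = { g [^] k | k. k \<in> (UNIV :: nat set) }"
    using generate_pow_on_finite_carrier[OF fin g] .
  also have "\<dots> = (\<lambda>i. g [^] i) ` {..<ord g}"
  proof (rule Set.set_eqI, rule iffI)
    fix x assume "x \<in> { g [^] k | k. k \<in> (UNIV :: nat set) }"
    then obtain k :: nat where "x = g [^] k" by auto
    then have "x = g [^] (k mod ord g)" using pow_mod_ord[OF g] by simp
    moreover have "k mod ord g < ord g" using o by simp
    ultimately show "x \<in> (\<lambda>i. g [^] i) ` {..<ord g}" by auto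
  next
    fix x assume "x \<in> (\<lambda>i. g [^] i) ` {..<ord g}"
    then obtain k :: nat where "x = g [^] k" by auto
    then show "x \<in> { g [^] k | k. k \<in> (UNIV :: nat set) }" by auto
  qed
  finally show ?thesis .
qed

lemma inj_pow_ord:
  assumes g: "g \<in> carrier G"
  shows "inj_on (\<lambda>i. g [^] i) {..<ord g}"
proof (rule inj_onI)
  fix x y :: nat assume xy: "x \<in> {..<ord g}" "y \<in> {..<ord g}" "g [^] x = g [^] y"
  have d: "int (ord g) dvd (int y - int x)" using int_pow_eq[OF g, of "int x" "int y"] xy(3)
    by (simp add: int_pow_int)
  show "x = y"
  proof (rule ccontr)
    assume "x \<noteq> y"
    then have "int y - int x \<noteq> 0" by simp
    then have "\<bar>int (ord g)\<bar> \<le> \<bar>int y - int x\<bar>" using dvd_imp_le_int d by blast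
    moreover have "\<bar>int y - int x\<bar> < int (ord g)" using xy(1,2) by auto
    ultimately show False by simp
  qed
qed

lemma card_cyclic_roots:
  assumes fin: "finite (carrier G)" and g: "g \<in> carrier G"
  shows "card {h \<in> generate G {g}. h [^] (M::nat) = \<one>} = gcd (ord g) M"
proof -
  have o: "ord g \<ge> 1" using ord_ge_1[OF fin g] .
  have "{h \<in> generate G {g}. h [^] M = \<one>} = (\<lambda>i. g [^] i) ` {i. i < ord g \<and> ord g dvd i * M}"
    using g by (auto simp: gen_eq_img[OF fin g] nat_pow_pow pow_eq_id)
  also have "card \<dots> = card {i. i < ord g \<and> ord g dvd i * M}"
    by (rule card_image, rule inj_on_subset[OF inj_pow_ord[OF g]]) auto
  also have "\<dots> = gcd (ord g) M" using card_dvd_mult_below o by simp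
  finally show ?thesis .
qed

end

context group begin

lemma orbit_stab_general:
  assumes H: "subgroup H G" and fH: "finite H" and SH: "S \<subseteq> H"
    and crit: "\<And>h h'. h \<in> H \<Longrightarrow> h' \<in> H \<Longrightarrow> (f h = f h') = (inv h \<otimes> h' \<in> S)"
  shows "card (f ` H) * card S = card H"
proof -
  have Hc: "H \<subseteq> carrier G" using H subgroup.subset by blast
  have fib: "{h \<in> H. f h = y} = (\<lambda>s. h0 \<otimes> s) ` S" if y: "y = f h0" "h0 \<in> H" for y h0
  proof (rule Set.set_eqI, rule iffI)
    fix h assume "h \<in> {h \<in> H. f h = y}"
    then have h: "h \<in> H" "f h0 = f h" using y by auto
    then have m: "inv h0 \<otimes> h \<in> S" using crit[OF y(2) h(1)] by simp
    have e: "h = h0 \<otimes> (inv h0 \<otimes> h)" using h(1) y(2) Hc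
      by (simp add: m_assoc[symmetric] subsetD)
    show "h \<in> (\<lambda>s. h0 \<otimes> s) ` S" by (rule image_eqI[where f="\<lambda>s. h0 \<otimes> s", OF e m])
  next
    fix h assume "h \<in> (\<lambda>s. h0 \<otimes> s) ` S"
    then obtain s where s: "s \<in> S" "h = h0 \<otimes> s" by auto
    have sH: "s \<in> H" using s SH by auto
    have hH: "h \<in> H" using subgroup.m_closed[OF H y(2) sH] by (simp add: s(2))
    have "inv h0 \<otimes> h = s" using s(2) y(2) sH Hc
      by (simp add: m_assoc[symmetric] subsetD)
    then have "f h0 = f h" using crit[OF y(2) hH] s(1) by simp
    then show "h \<in> {h \<in> H. f h = y}" using hH y by simp
  qed
  have cardfib: "card {h \<in> H. f h = y} = card S" if "y \<in> f ` H" for y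
  proof -
    obtain h0 where h0: "h0 \<in> H" "y = f h0" using \<open>y \<in> f ` H\<close> by auto
    have "inj_on (\<lambda>s. h0 \<otimes> s) S"
      using h0(1) SH Hc by (auto simp: inj_on_def subsetD)
    then show ?thesis using fib[OF h0(2) h0(1)] by (simp add: card_image)
  qed
  have "card H = (\<Sum>h\<in>H. 1)" by simp
  also have "\<dots> = (\<Sum>y\<in>f ` H. \<Sum>h\<in>{x \<in> H. f x = y}. 1)"
    by (rule sum.image_gen[OF fH])
  also have "\<dots> = (\<Sum>y\<in>f ` H. card S)" using cardfib by simp
  also have "\<dots> = card (f ` H) * card S" by simp
  finally show ?thesis by simp
qed

lemma lcoset_self:
  assumes S: "subgroup S G" and s: "s \<in> S"
  shows "s <# S = S"
proof (rule Set.set_eqI, rule iffI)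
  fix x assume "x \<in> s <# S"
  then obtain t where t: "t \<in> S" "x = s \<otimes> t" unfolding l_coset_def by auto
  show "x \<in> S" using subgroup.m_closed[OF S s t(1)] by (simp add: t(2))
next
  fix x assume x: "x \<in> S"
  have sc: "s \<in> carrier G" "x \<in> carrier G" using s x subgroup.mem_carrier[OF S] by auto
  have m: "inv s \<otimes> x \<in> S" using subgroup.m_closed[OF S subgroup.m_inv_closed[OF S s] x] .
  have e: "x = s \<otimes> (inv s \<otimes> x)" using sc by (simp add: m_assoc[symmetric])
  show "x \<in> s <# S" unfolding l_coset_def using m e by blast
qed

lemma lcoset_eq_iff:
  assumes S: "subgroup S G" and g: "g \<in> carrier G" and g': "g' \<in> carrier G"
  shows "(g <# S = g' <# S) = (inv g \<otimes> g' \<in> S)"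
proof
  assume eq: "g <# S = g' <# S"
  have "g' \<otimes> \<one> \<in> g' <# S" using subgroup.one_closed[OF S] unfolding l_coset_def by blast
  then have "g' \<in> g' <# S" using g' by simp
  then have "g' \<in> g <# S" using eq by simp
  then obtain s where s: "s \<in> S" "g' = g \<otimes> s" unfolding l_coset_def by auto
  have sc: "s \<in> carrier G" using subgroup.mem_carrier[OF S s(1)] .
  have "inv g \<otimes> g' = s" using g sc s(2) by (simp add: m_assoc[symmetric])
  then show "inv g \<otimes> g' \<in> S" using s by simp
next
  assume a: "inv g \<otimes> g' \<in> S"
  define s where "s = inv g \<otimes> g'"
  have g'eq: "g' = g \<otimes> s" using g g' by (simp add: s_def m_assoc[symmetric])
  have Sc: "S \<subseteq> carrier G" using subgroup.subset[OF S] .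
  have sS: "s \<in> S" using a s_def by simp
  have "g' <# S = g <# (s <# S)" using g Sc sS
    by (subst g'eq, subst lcos_m_assoc) (auto simp: subsetD)
  also have "s <# S = S" using lcoset_self[OF S sS] .
  finally show "g <# S = g' <# S" by simp
qed

lemma card_lcosets:
  assumes fin: "finite (carrier G)" and S: "subgroup S G" and K: "subgroup K G" and SK: "S \<subseteq> K"
  shows "card ((\<lambda>g. g <# S) ` K) * card S = card K"
proof (rule orbit_stab_general[OF K _ SK])
  show "finite K" using finite_subset[OF subgroup.subset[OF K] fin] .
  fix h h' assume "h \<in> K" "h' \<in> K"
  then have "h \<in> carrier G" "h' \<in> carrier G" using subgroup.mem_carrier[OF K] by auto
  then show "(h <# S = h' <# S) = (inv h \<otimes> h' \<in> S)"
    by (rule lcoset_eq_iff[OF S])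
qed

end

context group begin

lemma lcos_assoc':
  assumes "M \<subseteq> carrier G" "g \<in> carrier G" "h \<in> carrier G"
  shows "g <# (h <# M) = (g \<otimes> h) <# M"
  using lcos_m_assoc assms by blast

lemma orbit_eq_lemma:
  assumes Q: "subgroup Q G" and C: "C \<subseteq> carrier G" and q0: "q0 \<in> Q"
  shows "(\<lambda>q. q <# (q0 <# C)) ` Q = (\<lambda>q. q <# C) ` Q"
proof (rule Set.set_eqI, rule iffI)
  have q0c: "q0 \<in> carrier G" using subgroup.mem_carrier[OF Q q0] .
  fix x assume "x \<in> (\<lambda>q. q <# (q0 <# C)) ` Q"
  then obtain q where q: "q \<in> Q" "x = q <# (q0 <# C)" by auto
  have qc: "q \<in> carrier G" using subgroup.mem_carrier[OF Q q(1)] .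
  have "x = (q \<otimes> q0) <# C" using q(2) lcos_assoc'[OF C qc q0c] by simp
  moreover have "q \<otimes> q0 \<in> Q" using subgroup.m_closed[OF Q q(1) q0] .
  ultimately show "x \<in> (\<lambda>q. q <# C) ` Q" by blast
next
  have q0c: "q0 \<in> carrier G" using subgroup.mem_carrier[OF Q q0] .
  fix x assume "x \<in> (\<lambda>q. q <# C) ` Q"
  then obtain q where q: "q \<in> Q" "x = q <# C" by auto
  have qc: "q \<in> carrier G" using subgroup.mem_carrier[OF Q q(1)] .
  have iq: "inv q0 \<in> Q" using subgroup.m_inv_closed[OF Q q0] .
  have "(q \<otimes> inv q0) <# (q0 <# C) = ((q \<otimes> inv q0) \<otimes> q0) <# C"
    using lcos_assoc'[OF C _ q0c] qc q0c by simp
  also have "(q \<otimes> inv q0) \<otimes> q0 = q" using qc q0c by (simp add: m_assoc)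
  finally have "x = (q \<otimes> inv q0) <# (q0 <# C)" using q(2) by simp
  moreover have "q \<otimes> inv q0 \<in> Q" using subgroup.m_closed[OF Q q(1) iq] .
  ultimately show "x \<in> (\<lambda>q. q <# (q0 <# C)) ` Q" by blast
qed

lemma stab_crit:
  assumes Q: "subgroup Q G" and C: "C \<subseteq> carrier G" and q: "q \<in> Q" and q': "q' \<in> Q"
  shows "(q <# C = q' <# C) = (inv q \<otimes> q' \<in> {x \<in> Q. x <# C = C})"
proof -
  have qc: "q \<in> carrier G" "q' \<in> carrier G" using subgroup.mem_carrier[OF Q] q q' by auto
  have m: "inv q \<otimes> q' \<in> Q" using subgroup.m_closed[OF Q subgroup.m_inv_closed[OF Q q] q'] .
  have e1: "(inv q \<otimes> q') <# C = inv q <# (q' <# C)" using lcos_assoc'[OF C] qc by simp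
  have e2: "inv q <# (q <# C) = C" using lcos_assoc'[OF C] qc lcos_mult_one[OF C] by simp
  have e3: "q <# ((inv q \<otimes> q') <# C) = q' <# C"
    using lcos_assoc'[OF C] qc by (simp add: m_assoc[symmetric])
  show ?thesis
  proof
    assume "q <# C = q' <# C"
    then have "(inv q \<otimes> q') <# C = C" using e1 e2 by simp
    then show "inv q \<otimes> q' \<in> {x \<in> Q. x <# C = C}" using m by simp
  next
    assume "inv q \<otimes> q' \<in> {x \<in> Q. x <# C = C}"
    then have "(inv q \<otimes> q') <# C = C" by simp
    then show "q <# C = q' <# C" using e3 by simp
  qed
qed

lemma sylow_conj:
  fixes P K Q :: "'a set"
  assumes fin: "finite (carrier G)" and p: "Factorial_Ring.prime p"
    and K: "subgroup K G" and P: "subgroup P G" and PK: "P \<subseteq> K"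
    and ndvd: "\<not> p dvd card ((\<lambda>g. g <# P) ` K)"
    and Q: "subgroup Q G" and QK: "Q \<subseteq> K" and Qc: "card Q = p ^ k"
  shows "\<exists>g\<in>K. \<forall>q\<in>Q. inv g \<otimes> q \<otimes> g \<in> P"
proof -
  define L where "L = (\<lambda>g. g <# P) ` K"
  define orb where "orb = (\<lambda>C. (\<lambda>q. q <# C) ` Q)"
  have Pc: "P \<subseteq> carrier G" using subgroup.subset[OF P] .
  have Kc: "K \<subseteq> carrier G" using subgroup.subset[OF K] .
  have Qcar: "Q \<subseteq> carrier G" using subgroup.subset[OF Q] .
  have finL: "finite L" unfolding L_def using finite_subset[OF Kc fin] by simp
  have finQ: "finite Q" using finite_subset[OF Qcar fin] .
  have Lc: "C \<subseteq> carrier G" if "C \<in> L" for C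
    using that Kc Pc l_coset_subset_G unfolding L_def by blast
  have orbL: "orb C \<subseteq> L" if C: "C \<in> L" for C
  proof
    fix x assume "x \<in> orb C"
    then obtain q where q: "q \<in> Q" "x = q <# C" unfolding orb_def by auto
    obtain g where g: "g \<in> K" "C = g <# P" using C unfolding L_def by auto
    have "x = (q \<otimes> g) <# P" using q g lcos_assoc'[OF Pc] Qcar Kc by auto
    moreover have "q \<otimes> g \<in> K" using subgroup.m_closed[OF K] q(1) g(1) QK by auto
    ultimately show "x \<in> L" unfolding L_def by blast
  qed
  have selfin: "C \<in> orb C" if "C \<in> L" for C
  proof -
    have "\<one> <# C = C" using lcos_mult_one Lc[OF that] by simp
    then show ?thesis unfolding orb_def using subgroup.one_closed[OF Q] by force
  qed
  have orb_eq: "orb D = orb C" if C: "C \<in> L" and D: "D \<in> orb C" for C D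
  proof -
    obtain q0 where "q0 \<in> Q" "D = q0 <# C" using D unfolding orb_def by auto
    then show ?thesis unfolding orb_def using orbit_eq_lemma[OF Q Lc[OF C]] by simp
  qed
  have fixed: "\<exists>C\<in>L. \<forall>q\<in>Q. q <# C = C"
  proof (rule ccontr)
    assume nf: "\<not> (\<exists>C\<in>L. \<forall>q\<in>Q. q <# C = C)"
    have pd: "p dvd card (orb C)" if C: "C \<in> L" for C
    proof -
      have cQ: "card (orb C) * card {x \<in> Q. x <# C = C} = card Q"
        unfolding orb_def
      proof (rule orbit_stab_general[OF Q finQ])
        show "{x \<in> Q. x <# C = C} \<subseteq> Q" by blast
        fix h h' assume "h \<in> Q" "h' \<in> Q"
        then show "(h <# C = h' <# C) = (inv h \<otimes> h' \<in> {x \<in> Q. x <# C = C})"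
          by (rule stab_crit[OF Q Lc[OF C]])
      qed
      have "card (orb C) dvd card Q" using cQ[symmetric] by (rule dvdI)
      then have "card (orb C) dvd p ^ k" using Qc by simp
      then obtain i where i: "card (orb C) = p ^ i" using divides_primepow_nat[OF p] by auto
      show ?thesis
      proof (cases i)
        case 0
        then have c1: "card (orb C) = 1" using i by simp
        obtain x where x: "orb C = {x}" using card_1_singletonE[OF c1] by blast
        have "C \<in> orb C" using selfin[OF C] .
        then have "orb C = {C}" using x by simp
        then have "\<forall>q\<in>Q. q <# C = C" unfolding orb_def by auto
        then show ?thesis using nf C by blast
      next
        case (Suc j)
        then show ?thesis using i by simp
      qed
    qed
    have U: "\<Union>(orb ` L) = L"
    proof (rule subset_antisym)
      show "\<Union>(orb ` L) \<subseteq> L" using orbL by (simp add: UN_subset_iff)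
      show "L \<subseteq> \<Union>(orb ` L)"
      proof
        fix C assume "C \<in> L"
        then show "C \<in> \<Union>(orb ` L)" using selfin[of C] by (intro UN_I)
      qed
    qed
    have disj: "pairwise disjnt (orb ` L)"
    proof (rule pairwiseI)
      fix O1 O2 assume "O1 \<in> orb ` L" "O2 \<in> orb ` L" "O1 \<noteq> O2"
      then obtain C1 C2 where c: "C1 \<in> L" "C2 \<in> L" "O1 = orb C1" "O2 = orb C2" by auto
      show "disjnt O1 O2"
      proof (rule ccontr)
        assume "\<not> disjnt O1 O2"
        then obtain D where D: "D \<in> orb C1" "D \<in> orb C2" using c unfolding disjnt_def by auto
        have "orb C1 = orb D" using orb_eq[OF c(1) D(1)] by simp
        also have "\<dots> = orb C2" using orb_eq[OF c(2) D(2)] .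
        finally show False using c \<open>O1 \<noteq> O2\<close> by simp
      qed
    qed
    have fin_orbs: "finite A" if "A \<in> orb ` L" for A
      using that orbL finL finite_subset by blast
    have "card L = sum card (orb ` L)"
      using card_Union_disjoint[OF disj fin_orbs] U by simp
    moreover have "p dvd sum card (orb ` L)" using pd by (auto intro: dvd_sum)
    ultimately show False using ndvd unfolding L_def by simp
  qed
  then obtain g where g: "g \<in> K" "\<forall>q\<in>Q. q <# (g <# P) = g <# P" unfolding L_def by auto
  have gc: "g \<in> carrier G" using g(1) Kc by auto
  show ?thesis
  proof (intro bexI[OF _ g(1)] ballI)
    fix q assume q: "q \<in> Q"
    have qc: "q \<in> carrier G" using q Qcar by auto
    have "(q \<otimes> g) <# P = g <# P" using g(2) q lcos_assoc'[OF Pc qc gc] by simp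
    then have "inv (q \<otimes> g) \<otimes> g \<in> P" using lcoset_eq_iff[OF P] qc gc by simp
    then have "inv (inv (q \<otimes> g) \<otimes> g) \<in> P" using subgroup.m_inv_closed[OF P] by blast
    moreover have "inv (inv (q \<otimes> g) \<otimes> g) = inv g \<otimes> q \<otimes> g"
      using qc gc by (simp add: inv_mult_group m_assoc)
    ultimately show "inv g \<otimes> q \<otimes> g \<in> P" by simp
  qed
qed

end

definition cent :: "('a, 'b) monoid_scheme \<Rightarrow> 'a set \<Rightarrow> 'a \<Rightarrow> 'a set" where
  "cent G K x = {k \<in> K. k \<otimes>\<^bsub>G\<^esub> x = x \<otimes>\<^bsub>G\<^esub> k}"

definition centK :: "('a, 'b) monoid_scheme \<Rightarrow> 'a set \<Rightarrow> 'a set \<Rightarrow> 'a set" where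
  "centK G K S = {k \<in> K. \<forall>s\<in>S. k \<otimes>\<^bsub>G\<^esub> s = s \<otimes>\<^bsub>G\<^esub> k}"

definition normK :: "('a, 'b) monoid_scheme \<Rightarrow> 'a set \<Rightarrow> 'a set \<Rightarrow> 'a set" where
  "normK G K S = {k \<in> K. (\<lambda>s. k \<otimes>\<^bsub>G\<^esub> s \<otimes>\<^bsub>G\<^esub> inv\<^bsub>G\<^esub> k) ` S = S}"

definition proots :: "('a, 'b) monoid_scheme \<Rightarrow> 'a set \<Rightarrow> nat \<Rightarrow> 'a set" where
  "proots G K M = {k \<in> K. k [^]\<^bsub>G\<^esub> M = \<one>\<^bsub>G\<^esub>}"

context group begin

lemma inv_cancel_l1 [simp]: "x \<in> carrier G \<Longrightarrow> y \<in> carrier G \<Longrightarrow> inv x \<otimes> (x \<otimes> y) = y"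
  by (simp add: m_assoc[symmetric])

lemma inv_cancel_l2 [simp]: "x \<in> carrier G \<Longrightarrow> y \<in> carrier G \<Longrightarrow> x \<otimes> (inv x \<otimes> y) = y"
  by (simp add: m_assoc[symmetric])

lemma conj_closed [simp]: "g \<in> carrier G \<Longrightarrow> a \<in> carrier G \<Longrightarrow> g \<otimes> a \<otimes> inv g \<in> carrier G"
  by simp

lemma conj_mult:
  assumes "g \<in> carrier G" "a \<in> carrier G" "b \<in> carrier G"
  shows "g \<otimes> (a \<otimes> b) \<otimes> inv g = (g \<otimes> a \<otimes> inv g) \<otimes> (g \<otimes> b \<otimes> inv g)"
  using assms by (simp add: m_assoc)

lemma conj_pow:
  assumes g: "g \<in> carrier G" and a: "a \<in> carrier G"
  shows "(g \<otimes> a \<otimes> inv g) [^] (n::nat) = g \<otimes> a [^] n \<otimes> inv g"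
proof (induction n)
  case 0
  then show ?case using g by simp
next
  case (Suc n)
  have "(g \<otimes> a \<otimes> inv g) [^] Suc n = (g \<otimes> a [^] n \<otimes> inv g) \<otimes> (g \<otimes> a \<otimes> inv g)"
    using Suc by simp
  also have "\<dots> = g \<otimes> (a [^] n \<otimes> a) \<otimes> inv g" using g a by (simp add: m_assoc)
  also have "\<dots> = g \<otimes> a [^] Suc n \<otimes> inv g" by simp
  finally show ?case .
qed

lemma conj_comp:
  assumes "g \<in> carrier G" "h \<in> carrier G" "a \<in> carrier G"
  shows "(g \<otimes> h) \<otimes> a \<otimes> inv (g \<otimes> h) = g \<otimes> (h \<otimes> a \<otimes> inv h) \<otimes> inv g"
  using assms by (simp add: m_assoc inv_mult_group)

lemma conj_cancel1:
  assumes "g \<in> carrier G" "a \<in> carrier G"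
  shows "inv g \<otimes> (g \<otimes> a \<otimes> inv g) \<otimes> g = a"
  using assms by (simp add: m_assoc)

lemma conj_cancel2:
  assumes "g \<in> carrier G" "a \<in> carrier G"
  shows "g \<otimes> (inv g \<otimes> a \<otimes> g) \<otimes> inv g = a"
  using assms by (simp add: m_assoc)

lemma conj_cancel3:
  assumes "g \<in> carrier G" "a \<in> carrier G"
  shows "inv g \<otimes> (g \<otimes> a \<otimes> inv g) \<otimes> inv (inv g) = a"
  using assms by (simp add: m_assoc)

lemma conj_eq_iff:
  assumes "g \<in> carrier G" "a \<in> carrier G" "b \<in> carrier G"
  shows "(g \<otimes> a \<otimes> inv g = g \<otimes> b \<otimes> inv g) = (a = b)"
  using assms conj_cancel1 by metis

lemma conj_one_iff:
  assumes "g \<in> carrier G" "a \<in> carrier G"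
  shows "(g \<otimes> a \<otimes> inv g = \<one>) = (a = \<one>)"
  using conj_eq_iff[OF assms one_closed] assms by simp

lemma conj_inj: "g \<in> carrier G \<Longrightarrow> inj_on (\<lambda>a. g \<otimes> a \<otimes> inv g) (carrier G)"
  by (auto simp: inj_on_def conj_eq_iff)

lemma conj_commute_iff:
  assumes "g \<in> carrier G" "a \<in> carrier G"
  shows "(g \<otimes> a \<otimes> inv g = a) = (g \<otimes> a = a \<otimes> g)"
proof
  assume "g \<otimes> a \<otimes> inv g = a"
  then have "g \<otimes> a \<otimes> inv g \<otimes> g = a \<otimes> g" by simp
  then show "g \<otimes> a = a \<otimes> g" using assms by (simp add: m_assoc)
next
  assume "g \<otimes> a = a \<otimes> g"
  then show "g \<otimes> a \<otimes> inv g = a" using assms by (simp add: m_assoc)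
qed

lemma conj_subgroup:
  assumes H: "subgroup H G" and g: "g \<in> carrier G"
  shows "subgroup ((\<lambda>h. g \<otimes> h \<otimes> inv g) ` H) G"
proof (rule subgroupI)
  have Hc: "H \<subseteq> carrier G" using subgroup.subset[OF H] .
  show "(\<lambda>h. g \<otimes> h \<otimes> inv g) ` H \<subseteq> carrier G" using Hc g by auto
  show "(\<lambda>h. g \<otimes> h \<otimes> inv g) ` H \<noteq> {}" using subgroup.one_closed[OF H] by auto
  fix x assume "x \<in> (\<lambda>h. g \<otimes> h \<otimes> inv g) ` H"
  then obtain h where h: "h \<in> H" "x = g \<otimes> h \<otimes> inv g" by auto
  have hc: "h \<in> carrier G" using h Hc by auto
  have "inv x = g \<otimes> inv h \<otimes> inv g" using h(2) g hc by (simp add: inv_mult_group m_assoc)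
  then show "inv x \<in> (\<lambda>h. g \<otimes> h \<otimes> inv g) ` H" using subgroup.m_inv_closed[OF H h(1)] by auto
next
  have Hc: "H \<subseteq> carrier G" using subgroup.subset[OF H] .
  fix x y assume "x \<in> (\<lambda>h. g \<otimes> h \<otimes> inv g) ` H" "y \<in> (\<lambda>h. g \<otimes> h \<otimes> inv g) ` H"
  then obtain h k where hk: "h \<in> H" "x = g \<otimes> h \<otimes> inv g" "k \<in> H" "y = g \<otimes> k \<otimes> inv g" by auto
  have c: "h \<in> carrier G" "k \<in> carrier G" using hk Hc by auto
  have "x \<otimes> y = g \<otimes> (h \<otimes> k) \<otimes> inv g" using hk c g by (simp add: conj_mult)
  then show "x \<otimes> y \<in> (\<lambda>h. g \<otimes> h \<otimes> inv g) ` H" using subgroup.m_closed[OF H hk(1) hk(3)] by auto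
qed

lemma card_conj_image:
  assumes "S \<subseteq> carrier G" "g \<in> carrier G"
  shows "card ((\<lambda>h. g \<otimes> h \<otimes> inv g) ` S) = card S"
  using assms conj_inj card_image inj_on_subset by blast

lemma cent_subgroup:
  assumes K: "subgroup K G" and x: "x \<in> carrier G"
  shows "subgroup (cent G K x) G"
proof (rule subgroupI)
  have Kc: "K \<subseteq> carrier G" using subgroup.subset[OF K] .
  show "cent G K x \<subseteq> carrier G" unfolding cent_def using Kc by auto
  show "cent G K x \<noteq> {}" unfolding cent_def using subgroup.one_closed[OF K] x by auto
  fix a assume a: "a \<in> cent G K x"
  then have ac: "a \<in> carrier G" "a \<in> K" "a \<otimes> x = x \<otimes> a" unfolding cent_def using Kc by auto
  have "inv a \<otimes> x = x \<otimes> inv a"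
    using ac x by (metis inv_comm m_closed inv_mult_group inv_inv inv_closed m_assoc r_inv r_one l_inv l_one)
  then show "inv a \<in> cent G K x" unfolding cent_def using subgroup.m_inv_closed[OF K ac(2)] by auto
next
  have Kc: "K \<subseteq> carrier G" using subgroup.subset[OF K] .
  fix a b assume "a \<in> cent G K x" "b \<in> cent G K x"
  then have ab: "a \<in> K" "b \<in> K" "a \<otimes> x = x \<otimes> a" "b \<otimes> x = x \<otimes> b" unfolding cent_def by auto
  have c: "a \<in> carrier G" "b \<in> carrier G" using ab Kc by auto
  have "a \<otimes> b \<otimes> x = x \<otimes> (a \<otimes> b)"
    using c x ab(3,4) by (simp add: m_assoc) (simp add: m_assoc[symmetric])
  then show "a \<otimes> b \<in> cent G K x" unfolding cent_def using subgroup.m_closed[OF K ab(1,2)] by auto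
qed

lemma centK_subgroup:
  assumes K: "subgroup K G" and S: "S \<subseteq> carrier G"
  shows "subgroup (centK G K S) G"
proof -
  have "centK G K S = K \<inter> (\<Inter>s\<in>S. cent G K s)" unfolding centK_def cent_def by auto
  moreover have "subgroup (K \<inter> (\<Inter>s\<in>S. cent G K s)) G"
  proof (cases "S = {}")
    case True then show ?thesis using K by simp
  next
    case False
    have "subgroup (\<Inter>s\<in>S. cent G K s) G"
      using subgroups_Inter[of "cent G K ` S"] False cent_subgroup[OF K] S by auto
    then show ?thesis using K subgroups_Inter_pair by blast
  qed
  ultimately show ?thesis by simp
qed

end

context group begin

lemma normK_subgroup:
  assumes K: "subgroup K G" and S: "S \<subseteq> carrier G"
  shows "subgroup (normK G K S) G"
proof (rule subgroupI)
  have Kc: "K \<subseteq> carrier G" using subgroup.subset[OF K] .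
  show "normK G K S \<subseteq> carrier G" unfolding normK_def using Kc by auto
  have "(\<lambda>s. \<one> \<otimes> s \<otimes> inv \<one>) ` S = (\<lambda>s. s) ` S" by (rule image_cong) (use S in auto)
  then have "\<one> \<in> normK G K S" unfolding normK_def using subgroup.one_closed[OF K] by simp
  then show "normK G K S \<noteq> {}" by auto
next
  have Kc: "K \<subseteq> carrier G" using subgroup.subset[OF K] .
  fix k assume k: "k \<in> normK G K S"
  then have kK: "k \<in> K" and kS: "(\<lambda>s. k \<otimes> s \<otimes> inv k) ` S = S" unfolding normK_def by auto
  have kc: "k \<in> carrier G" using kK Kc by auto
  have "(\<lambda>s. inv k \<otimes> s \<otimes> inv (inv k)) ` S = S"
  proof (rule Set.set_eqI, rule iffI)
    fix x assume "x \<in> (\<lambda>s. inv k \<otimes> s \<otimes> inv (inv k)) ` S"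
    then obtain s where s: "s \<in> S" "x = inv k \<otimes> s \<otimes> inv (inv k)" by auto
    have "s \<in> (\<lambda>s. k \<otimes> s \<otimes> inv k) ` S" using kS s(1) by simp
    then obtain t where t: "t \<in> S" "s = k \<otimes> t \<otimes> inv k" by auto
    have tc: "t \<in> carrier G" using t(1) S by auto
    have "x = t" using s(2) t(2) conj_cancel1[OF kc tc] inv_inv[OF kc] by simp
    then show "x \<in> S" using t(1) by simp
  next
    fix x assume x: "x \<in> S"
    have "k \<otimes> x \<otimes> inv k \<in> S" using kS x by blast
    moreover have "x = inv k \<otimes> (k \<otimes> x \<otimes> inv k) \<otimes> inv (inv k)"
      using kc x S conj_cancel1[OF kc, of x] by auto
    ultimately show "x \<in> (\<lambda>s. inv k \<otimes> s \<otimes> inv (inv k)) ` S" by blast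
  qed
  then show "inv k \<in> normK G K S" unfolding normK_def using subgroup.m_inv_closed[OF K kK] by simp
next
  have Kc: "K \<subseteq> carrier G" using subgroup.subset[OF K] .
  fix a b assume "a \<in> normK G K S" "b \<in> normK G K S"
  then have ab: "a \<in> K" "b \<in> K" "(\<lambda>s. a \<otimes> s \<otimes> inv a) ` S = S" "(\<lambda>s. b \<otimes> s \<otimes> inv b) ` S = S"
    unfolding normK_def by auto
  have c: "a \<in> carrier G" "b \<in> carrier G" using ab Kc by auto
  have "(\<lambda>s. (a \<otimes> b) \<otimes> s \<otimes> inv (a \<otimes> b)) ` S = (\<lambda>s. a \<otimes> s \<otimes> inv a) ` ((\<lambda>s. b \<otimes> s \<otimes> inv b) ` S)"
    unfolding image_image by (rule image_cong) (use c S in \<open>auto simp: conj_comp\<close>)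
  also have "\<dots> = S" using ab(3,4) by simp
  finally show "a \<otimes> b \<in> normK G K S" unfolding normK_def using subgroup.m_closed[OF K ab(1,2)] by simp
qed

end

locale cyc_sylow = group G for G (structure) +
  fixes p a m :: nat and P :: "'a set" and y :: 'a
  assumes fin: "finite (carrier G)" and p: "Factorial_Ring.prime p"
    and ordG: "order G = p ^ a * m" and ndvd_m: "\<not> p dvd m"
    and P: "subgroup P G" and Pcard: "card P = p ^ a"
    and y: "y \<in> carrier G" and Pgen: "P = generate G {y}"
begin

lemma Pc: "P \<subseteq> carrier G" using subgroup.subset[OF P] .

lemma ord_y: "ord y = p ^ a"
  using generate_pow_card[OF y] Pgen Pcard by simp

lemma P_img: "P = (\<lambda>i. y [^] i) ` {..<p ^ a}"
  using gen_eq_img[OF fin y] Pgen ord_y by simp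

lemma P_comm: assumes "x \<in> P" "z \<in> P" shows "x \<otimes> z = z \<otimes> x"
proof -
  obtain i j where "x = y [^] (i::nat)" "z = y [^] (j::nat)" using assms P_img by auto
  then show ?thesis using y by (simp add: nat_pow_mult add.commute)
qed

lemma p_gt1: "p > 1" using p prime_gt_1_nat by blast

lemma m_pos: "m > 0"
proof -
  have "order G > 0" using fin order_gt_0_iff_finite by blast
  then show ?thesis using ordG by (cases m) auto
qed

lemma card_sub_dvd: assumes "subgroup K G" shows "card K dvd order G"
  using lagrange[OF assms] by (metis dvd_triv_right)

lemma index_ndvd:
  assumes K: "subgroup K G" and PK: "P \<subseteq> K"
  shows "\<not> p dvd card ((\<lambda>g. g <# P) ` K)"
proof
  assume pd: "p dvd card ((\<lambda>g. g <# P) ` K)"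
  have e: "card ((\<lambda>g. g <# P) ` K) * p ^ a = card K"
    using card_lcosets[OF fin P K PK] Pcard by simp
  have "card ((\<lambda>g. g <# P) ` K) * p ^ a dvd p ^ a * m"
    using card_sub_dvd[OF K] ordG e by simp
  then have "card ((\<lambda>g. g <# P) ` K) dvd m" using p_gt1 by (simp add: mult.commute)
  then show False using pd ndvd_m dvd_trans by blast
qed

lemma conj_into_P:
  assumes K: "subgroup K G" and PK: "P \<subseteq> K" and Q: "subgroup Q G" and QK: "Q \<subseteq> K"
    and Qc: "card Q = p ^ k"
  shows "\<exists>g\<in>K. \<forall>q\<in>Q. inv g \<otimes> q \<otimes> g \<in> P"
  using sylow_conj[OF fin p K P PK index_ndvd[OF K PK] Q QK Qc] .

lemma pelem_ord: assumes "u \<in> carrier G" "u [^] (p ^ a) = \<one>" shows "\<exists>i. ord u = p ^ i"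
proof -
  have "ord u dvd p ^ a" using assms pow_eq_id by blast
  then show ?thesis using divides_primepow_nat[OF p] by auto
qed

lemma pelem_conj:
  assumes K: "subgroup K G" and PK: "P \<subseteq> K" and u: "u \<in> K" and up: "u [^] (p ^ a) = \<one>"
  shows "\<exists>g\<in>K. inv g \<otimes> u \<otimes> g \<in> P"
proof -
  have uc: "u \<in> carrier G" using u subgroup.subset[OF K] by auto
  have Q: "subgroup (generate G {u}) G" using generate_is_subgroup uc by auto
  have QK: "generate G {u} \<subseteq> K" using generate_subgroup_incl[OF _ K] u by auto
  obtain i where "ord u = p ^ i" using pelem_ord[OF uc up] by auto
  then have "card (generate G {u}) = p ^ i" using generate_pow_card[OF uc] by simp
  then obtain g where "g \<in> K" "\<forall>q\<in>generate G {u}. inv g \<otimes> q \<otimes> g \<in> P"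
    using conj_into_P[OF K PK Q QK] by blast
  moreover have "u \<in> generate G {u}" using generate.incl[of u "{u}" G] by simp
  ultimately show ?thesis by blast
qed

lemma conj_full:
  assumes Q: "Q \<subseteq> carrier G" and Qc: "card Q = p ^ a" and g: "g \<in> carrier G"
    and inP: "\<forall>q\<in>Q. inv g \<otimes> q \<otimes> g \<in> P"
  shows "(\<lambda>q. inv g \<otimes> q \<otimes> g) ` Q = P"
proof -
  have fP: "finite P" using finite_subset[OF Pc fin] .
  have c: "card ((\<lambda>q. inv g \<otimes> q \<otimes> g) ` Q) = card Q"
    using card_conj_image[OF Q inv_closed[OF g]] g by simp
  show ?thesis
    by (rule card_subset_eq[OF fP]) (use inP c Qc Pcard in auto)
qed

lemma P_sub_norm: "P \<subseteq> normK G (carrier G) P"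
proof
  fix q assume q: "q \<in> P"
  have qc: "q \<in> carrier G" using q Pc by auto
  have "(\<lambda>s. q \<otimes> s \<otimes> inv q) ` P = (\<lambda>s. s) ` P"
  proof (rule image_cong)
    fix s assume s: "s \<in> P"
    have sc: "s \<in> carrier G" using s Pc by auto
    have "q \<otimes> s \<otimes> inv q = s \<otimes> q \<otimes> inv q" using P_comm[OF q s] by simp
    also have "\<dots> = s" using qc sc by (simp add: m_assoc)
    finally show "q \<otimes> s \<otimes> inv q = s" .
  qed simp
  then show "q \<in> normK G (carrier G) P" unfolding normK_def using qc by simp
qed

lemma norm_conj_in:
  assumes n: "n \<in> normK G K P" and z: "z \<in> P"
  shows "n \<otimes> z \<otimes> inv n \<in> P"
  using n z unfolding normK_def by blast

lemma pelem_norm_in_P: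
  assumes x: "x \<in> normK G (carrier G) P" and xp: "x [^] (p ^ a) = \<one>"
  shows "x \<in> P"
proof -
  have NS: "subgroup (normK G (carrier G) P) G" using normK_subgroup[OF subgroup_self Pc] .
  obtain g where g: "g \<in> normK G (carrier G) P" "inv g \<otimes> x \<otimes> g \<in> P"
    using pelem_conj[OF NS P_sub_norm x xp] by blast
  have gc: "g \<in> carrier G" and xc: "x \<in> carrier G" using g(1) x unfolding normK_def by auto
  have "g \<otimes> (inv g \<otimes> x \<otimes> g) \<otimes> inv g \<in> P" using norm_conj_in[OF g] .
  then show ?thesis using conj_cancel2[OF gc xc] by simp
qed

lemma fusion:
  assumes K: "subgroup K G" and PK: "P \<subseteq> K" and u: "u \<in> P" and v: "v \<in> P" and g: "g \<in> K"
    and conj: "g \<otimes> u \<otimes> inv g = v"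
  shows "\<exists>n\<in>normK G K P. n \<otimes> u \<otimes> inv n = v"
proof -
  have Kc: "K \<subseteq> carrier G" using subgroup.subset[OF K] .
  have gc: "g \<in> carrier G" using g Kc by auto
  have uc: "u \<in> carrier G" and vc: "v \<in> carrier G" using u v Pc by auto
  define K' where "K' = cent G K v"
  have K': "subgroup K' G" unfolding K'_def using cent_subgroup[OF K vc] .
  have PK': "P \<subseteq> K'" unfolding K'_def cent_def using PK P_comm v by auto
  define Q where "Q = (\<lambda>q. g \<otimes> q \<otimes> inv g) ` P"
  have Q: "subgroup Q G" unfolding Q_def using conj_subgroup[OF P gc] .
  have Qc: "card Q = p ^ a" unfolding Q_def using card_conj_image[OF Pc gc] Pcard by simp
  have QK': "Q \<subseteq> K'"
  proof
    fix x assume "x \<in> Q"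
    then obtain q where q: "q \<in> P" "x = g \<otimes> q \<otimes> inv g" unfolding Q_def by auto
    have qc: "q \<in> carrier G" using q Pc by auto
    have xK: "x \<in> K" using q(2) subgroup.m_closed[OF K] subgroup.m_inv_closed[OF K g] g q(1) PK by auto
    have "x \<otimes> v = g \<otimes> (q \<otimes> u) \<otimes> inv g" using q(2) conj[symmetric] conj_mult gc qc uc by simp
    also have "\<dots> = g \<otimes> (u \<otimes> q) \<otimes> inv g" using P_comm[OF q(1) u] by simp
    also have "\<dots> = v \<otimes> x" using q(2) conj[symmetric] conj_mult gc qc uc by simp
    finally show "x \<in> K'" unfolding K'_def cent_def using xK by simp
  qed
  obtain c where c: "c \<in> K'" "\<forall>q\<in>Q. inv c \<otimes> q \<otimes> c \<in> P"
    using conj_into_P[OF K' PK' Q QK' Qc] by blast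
  have cK: "c \<in> K" and cv: "c \<otimes> v = v \<otimes> c" using c(1) unfolding K'_def cent_def by auto
  have cc: "c \<in> carrier G" using cK Kc by auto
  define n where "n = inv c \<otimes> g"
  have nK: "n \<in> K" unfolding n_def using subgroup.m_closed[OF K subgroup.m_inv_closed[OF K cK] g] .
  have nc: "n \<in> carrier G" using nK Kc by auto
  have nconj: "n \<otimes> q \<otimes> inv n = inv c \<otimes> (g \<otimes> q \<otimes> inv g) \<otimes> c" if "q \<in> carrier G" for q
    unfolding n_def using that gc cc by (simp add: m_assoc inv_mult_group)
  have sub: "(\<lambda>q. n \<otimes> q \<otimes> inv n) ` P \<subseteq> P"
  proof
    fix x assume "x \<in> (\<lambda>q. n \<otimes> q \<otimes> inv n) ` P"
    then obtain q where q: "q \<in> P" "x = n \<otimes> q \<otimes> inv n" by auto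
    have "g \<otimes> q \<otimes> inv g \<in> Q" unfolding Q_def using q(1) by auto
    then show "x \<in> P" using c(2) q nconj Pc by auto
  qed
  have "(\<lambda>q. n \<otimes> q \<otimes> inv n) ` P = P"
    by (rule card_subset_eq[OF finite_subset[OF Pc fin] sub]) (use card_conj_image[OF Pc nc] in simp)
  then have nN: "n \<in> normK G K P" unfolding normK_def using nK by simp
  have "n \<otimes> u \<otimes> inv n = inv c \<otimes> v \<otimes> c" using nconj[OF uc] conj by simp
  also have "\<dots> = v" using cc vc by (simp add: m_assoc cv[symmetric])
  finally show ?thesis using nN by blast
qed

end

lemma lift_pow_cong:
  fixes k :: int and p :: nat
  assumes "int p dvd k - 1"
  shows "int p ^ (j + 1) dvd k ^ (p ^ j) - 1"
proof (induction j)
  case 0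
  then show ?case using assms by simp
next
  case (Suc j)
  define K where "K = k ^ (p ^ j)"
  have IH: "int p ^ (j + 1) dvd K - 1" using Suc K_def by simp
  have pK: "int p dvd K - 1" using IH by (metis dvd_power dvd_trans add_gr_0 zero_less_one dvd_refl power_add power_one_right dvd_mult_right)
  have "(\<Sum>i<p. K ^ i) - int p = (\<Sum>i<p. K ^ i - 1)" by (simp add: sum_subtractf)
  moreover have "int p dvd (\<Sum>i<p. K ^ i - 1)"
  proof (rule dvd_sum)
    fix i assume "i \<in> {..<p}"
    have "K ^ i - 1 = (K - 1) * (\<Sum>l<i. K ^ l)" by (rule power_diff_1_eq)
    then show "int p dvd K ^ i - 1" using pK by simp
  qed
  ultimately have "int p dvd (\<Sum>i<p. K ^ i)" by (metis dvd_diff_commute dvd_add_right_iff dvd_refl diff_add_cancel)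
  then have "int p ^ (j + 1) * int p dvd (K - 1) * (\<Sum>i<p. K ^ i)" using IH by (rule mult_dvd_mono[rotated])
  moreover have "(K - 1) * (\<Sum>i<p. K ^ i) = K ^ p - 1" by (simp add: power_diff_1_eq)
  moreover have "K ^ p = k ^ (p ^ Suc j)" unfolding K_def by (simp add: power_mult[symmetric] mult.commute)
  ultimately show ?case by (simp add: ac_simps)
qed

context cyc_sylow begin

lemma conj_y_pow:
  assumes n: "n \<in> carrier G" and k: "n \<otimes> y \<otimes> inv n = y [^] (k::nat)"
  shows "n [^] (j::nat) \<otimes> y \<otimes> inv (n [^] j) = y [^] (k ^ j)"
proof (induction j)
  case 0
  then show ?case using y by simp
next
  case (Suc j)
  have "n [^] Suc j \<otimes> y \<otimes> inv (n [^] Suc j) = (n [^] j \<otimes> n) \<otimes> y \<otimes> inv (n [^] j \<otimes> n)"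
    by simp
  also have "\<dots> = n [^] j \<otimes> (n \<otimes> y \<otimes> inv n) \<otimes> inv (n [^] j)"
    using conj_comp n y by simp
  also have "\<dots> = n [^] j \<otimes> (y [^] k) \<otimes> inv (n [^] j)" using k by simp
  also have "\<dots> = (n [^] j \<otimes> y \<otimes> inv (n [^] j)) [^] k" using conj_pow[of "n [^] j" y k] n y by simp
  also have "\<dots> = y [^] (k ^ j * k)" using Suc y by (simp add: nat_pow_pow)
  finally show ?case by (simp add: mult.commute)
qed

lemma nat_pow_in_subgroup:
  assumes "subgroup H G" "h \<in> H" shows "h [^] (k::nat) \<in> H"
  using subgroup_int_pow_closed[OF assms, of "int k"] by (simp add: int_pow_int)

lemma aut_trivial:
  assumes n: "n \<in> normK G (carrier G) P" and x: "x \<in> P" and x1: "x \<noteq> \<one>"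
    and comm: "n \<otimes> x = x \<otimes> n"
  shows "\<forall>q\<in>P. n \<otimes> q = q \<otimes> n"
proof -
  have nc: "n \<in> carrier G" using n unfolding normK_def by auto
  have xc: "x \<in> carrier G" using x Pc by auto
  have NS: "subgroup (normK G (carrier G) P) G" using normK_subgroup[OF subgroup_self Pc] .
  obtain k where k: "k < p ^ a" "n \<otimes> y \<otimes> inv n = y [^] k"
  proof -
    have "y \<in> P" using Pgen generate.incl[of y "{y}" G] by simp
    then have "n \<otimes> y \<otimes> inv n \<in> P" using norm_conj_in[OF n] by simp
    then show ?thesis using that P_img by auto
  qed
  obtain i where i: "i < p ^ a" "x = y [^] i" using x P_img by auto
  have i0: "i \<noteq> 0"
  proof
    assume "i = 0" then have "x = \<one>" using i(2) by simp
    then show False using x1 by simp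
  qed
  have "n \<otimes> x \<otimes> inv n = x" using iffD2[OF conj_commute_iff[OF nc xc] comm] .
  then have "(n \<otimes> y \<otimes> inv n) [^] i = y [^] i" using conj_pow[OF nc y, of i] i(2) by simp
  then have "y [^] (k * i) = y [^] i" using k(2) y by (simp add: nat_pow_pow)
  then have "y [^] (int (k * i)) = y [^] (int i)" by (simp only: int_pow_int)
  then have dv: "int (p ^ a) dvd int i * (1 - int k)"
    using int_pow_eq[OF y, of "int (k * i)" "int i"] ord_y by (simp add: algebra_simps)
  have pk: "int p dvd int k - 1"
  proof (rule ccontr)
    assume np: "\<not> int p dvd int k - 1"
    have "Factorial_Ring.prime (int p)" using p by simp
    then have "coprime (int p) (1 - int k)" using np prime_imp_coprime
      by (metis dvd_diff_commute)
    then have "coprime (int (p ^ a)) (1 - int k)" by simp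
    then have "int (p ^ a) dvd int i" using dv coprime_dvd_mult_left_iff by blast
    then have "p ^ a dvd i" by (metis of_nat_dvd_iff of_nat_power)
    then show False using i(1) i0 by (simp add: nat_dvd_not_less)
  qed
  have a0: "a \<noteq> 0" using i(1) i0 by (cases a) auto
  define N1 where "N1 = p ^ (a - 1)"
  have "int p ^ (a - 1 + 1) dvd int k ^ N1 - 1" unfolding N1_def using lift_pow_cong[OF pk] .
  then have "int (p ^ a) dvd int (k ^ N1) - 1" using a0 by simp
  then have "y [^] (int (k ^ N1)) = y [^] (int 1)"
    using int_pow_eq[OF y, of "int (k ^ N1)" "int 1"] ord_y by (simp add: dvd_diff_commute)
  then have "y [^] (k ^ N1) = y [^] (1::nat)" by (simp only: int_pow_int)
  then have "y [^] (k ^ N1) = y" using y by simp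
  then have "n [^] N1 \<otimes> y \<otimes> inv (n [^] N1) = y" using conj_y_pow[OF nc k(2)] by simp
  then have "n [^] N1 \<otimes> y = y \<otimes> n [^] N1" using conj_commute_iff[of "n [^] N1" y] nc y by blast
  then have c1: "n [^] N1 \<in> cent G (carrier G) y" unfolding cent_def using nc by simp
  have "(n [^] m) [^] (p ^ a) = \<one>" using nc pow_order_eq_1[OF nc] ordG
    by (simp add: nat_pow_pow mult.commute)
  moreover have "n [^] m \<in> normK G (carrier G) P" using nat_pow_in_subgroup[OF NS n] .
  ultimately have "n [^] m \<in> P" using pelem_norm_in_P by blast
  moreover have "y \<in> P" using Pgen generate.incl[of y "{y}" G] by simp
  ultimately have c2: "n [^] m \<in> cent G (carrier G) y" unfolding cent_def
    using P_comm Pc by auto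
  have CS: "subgroup (cent G (carrier G) y) G" using cent_subgroup[OF subgroup_self y] .
  have cop: "coprime N1 m" unfolding N1_def using ndvd_m p prime_imp_coprime by auto
  obtain s t :: int where st: "s * int N1 + t * int m = 1"
    using bezout_int[of "int N1" "int m"] cop by (auto simp: coprime_iff_gcd_eq_1 gcd_int_def)
  have "n = n [^] (int 1)" using nc by (simp add: int_pow_int)
  also have "\<dots> = n [^] (int N1 * s + int m * t)" using st by (simp add: mult.commute)
  also have "\<dots> = (n [^] int N1) [^] s \<otimes> (n [^] int m) [^] t"
    using nc by (simp add: int_pow_mult int_pow_pow)
  also have "\<dots> = (n [^] N1) [^] s \<otimes> (n [^] m) [^] t" by (simp add: int_pow_int)
  finally have e: "n = (n [^] N1) [^] s \<otimes> (n [^] m) [^] t" .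
  have "(n [^] N1) [^] s \<otimes> (n [^] m) [^] t \<in> cent G (carrier G) y"
    using subgroup.m_closed[OF CS subgroup_int_pow_closed[OF CS c1, of s] subgroup_int_pow_closed[OF CS c2, of t]] .
  then have "n \<in> cent G (carrier G) y" by (rule ssubst[OF e])
  then have "n \<otimes> y = y \<otimes> n" unfolding cent_def by simp
  then have ny: "n \<otimes> y \<otimes> inv n = y" using iffD2[OF conj_commute_iff[OF nc y]] by blast
  show ?thesis
  proof
    fix q assume "q \<in> P"
    then obtain j where j: "q = y [^] (j::nat)" using P_img by auto
    have "n \<otimes> q \<otimes> inv n = q" using conj_pow[OF nc y, of j] ny j by simp
    then show "n \<otimes> q = q \<otimes> n" using iffD1[OF conj_commute_iff[OF nc]] j y by simp
  qed
qed

end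

context group begin

lemma pow_cong_ord:
  assumes x: "x \<in> carrier G" and xN: "x [^] (N::nat) = \<one>" and kl: "k mod N = l mod N"
  shows "x [^] (k::nat) = x [^] l"
proof -
  have r: "x [^] (N * q + r) = x [^] r" for q r
  proof -
    have "x [^] (N * q + r) = x [^] (N * q) \<otimes> x [^] r" using x by (simp add: nat_pow_mult)
    also have "x [^] (N * q) = (x [^] N) [^] q" using x by (simp add: nat_pow_pow)
    also have "\<dots> = \<one>" using xN by simp
    finally show ?thesis using x by simp
  qed
  have "x [^] k = x [^] (N * (k div N) + k mod N)" by simp
  also have "\<dots> = x [^] (k mod N)" by (rule r)
  also have "\<dots> = x [^] (l mod N)" using kl by simp
  also have "\<dots> = x [^] (N * (l div N) + l mod N)" by (rule r[symmetric])
  also have "\<dots> = x [^] l" by simp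
  finally show ?thesis .
qed

end

context cyc_sylow begin

lemma exists_e1: "\<exists>e. e mod p ^ a = 1 mod p ^ a \<and> m dvd e"
proof -
  have "coprime p m" by (rule prime_imp_coprime[OF p ndvd_m])
  then have cop: "coprime m (p ^ a)" by (simp add: coprime_commute)
  obtain x yy where "m * x = p ^ a * yy + gcd m (p ^ a)" using bezout_nat[of m "p ^ a"] m_pos by auto
  then have "m * x = p ^ a * yy + 1" using cop by simp
  then have "(m * x) mod p ^ a = (p ^ a * yy + 1) mod p ^ a" by simp
  also have "\<dots> = 1 mod p ^ a" by (rule mod_mult_self4)
  finally have "(m * x) mod p ^ a = 1 mod p ^ a" .
  then show ?thesis by (intro exI[of _ "m * x"]) simp
qed

lemma exists_e2: "\<exists>e. e mod m = 1 mod m \<and> p ^ a dvd e"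
proof -
  have "coprime p m" by (rule prime_imp_coprime[OF p ndvd_m])
  then have cop: "coprime (p ^ a) m" by simp
  have pa0: "p ^ a \<noteq> 0" using p_gt1 by simp
  obtain x yy where "p ^ a * x = m * yy + gcd (p ^ a) m" using bezout_nat[OF pa0, of m] by auto
  then have "p ^ a * x = m * yy + 1" using cop by simp
  then have "(p ^ a * x) mod m = (m * yy + 1) mod m" by simp
  also have "\<dots> = 1 mod m" by (rule mod_mult_self4)
  finally have "(p ^ a * x) mod m = 1 mod m" .
  then show ?thesis by (intro exI[of _ "p ^ a * x"]) simp
qed

definition "e1 = (SOME e. e mod p ^ a = 1 mod p ^ a \<and> m dvd e)"
definition "e2 = (SOME e. e mod m = 1 mod m \<and> p ^ a dvd e)"

lemma e1: "e1 mod p ^ a = 1 mod p ^ a" "m dvd e1"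
  using someI_ex[OF exists_e1] unfolding e1_def by auto
lemma e2: "e2 mod m = 1 mod m" "p ^ a dvd e2"
  using someI_ex[OF exists_e2] unfolding e2_def by auto

lemma pow_order_G: "x \<in> carrier G \<Longrightarrow> x [^] (p ^ a * m) = \<one>"
  using pow_order_eq_1 ordG by simp

lemma nat_mod_eq_int: "((x::nat) mod n = z mod n) = (int n dvd int x - int z)"
  by (metis of_nat_eq_iff of_nat_mod mod_eq_dvd_iff)

lemma e12: "(e1 + e2) mod (p ^ a * m) = 1 mod (p ^ a * m)"
proof -
  have "coprime p m" by (rule prime_imp_coprime[OF p ndvd_m])
  then have cop: "coprime (int (p ^ a)) (int m)" by simp
  have "int (p ^ a) dvd int (e1 + e2) - int 1"
  proof -
    have "(e1 + e2) mod p ^ a = (e1 mod p ^ a + e2 mod p ^ a) mod p ^ a" by (simp add: mod_add_eq)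
    also have "\<dots> = (1 mod p ^ a + 0) mod p ^ a" using e1(1) e2(2) by simp
    also have "\<dots> = 1 mod p ^ a" by simp
    finally show ?thesis by (rule nat_mod_eq_int[THEN iffD1])
  qed
  moreover have "int m dvd int (e1 + e2) - int 1"
  proof -
    have "(e1 + e2) mod m = (e1 mod m + e2 mod m) mod m" by (simp add: mod_add_eq)
    also have "\<dots> = (0 + 1 mod m) mod m" using e1(2) e2(1) by simp
    also have "\<dots> = 1 mod m" by simp
    finally show ?thesis by (rule nat_mod_eq_int[THEN iffD1])
  qed
  ultimately have "int (p ^ a) * int m dvd int (e1 + e2) - int 1"
    using cop divides_mult by blast
  then show ?thesis using nat_mod_eq_int[of "e1 + e2" "p ^ a * m" 1] by simp
qed

definition "pp g = g [^] e1"
definition "qq g = g [^] e2"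

lemma pp_closed [simp]: "g \<in> carrier G \<Longrightarrow> pp g \<in> carrier G" unfolding pp_def by simp
lemma qq_closed [simp]: "g \<in> carrier G \<Longrightarrow> qq g \<in> carrier G" unfolding qq_def by simp

lemma pp_qq: assumes g: "g \<in> carrier G" shows "pp g \<otimes> qq g = g"
proof -
  have "pp g \<otimes> qq g = g [^] (e1 + e2)" unfolding pp_def qq_def using g by (simp add: nat_pow_mult)
  also have "\<dots> = g [^] (1::nat)" by (rule pow_cong_ord[OF g pow_order_G[OF g] e12])
  finally show ?thesis using g by simp
qed

lemma pp_qq_comm: "g \<in> carrier G \<Longrightarrow> pp g \<otimes> qq g = qq g \<otimes> pp g"
  unfolding pp_def qq_def by (simp add: nat_pow_mult add.commute)

lemma pp_pow: assumes g: "g \<in> carrier G" shows "pp g [^] (p ^ a) = \<one>"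
proof -
  obtain c where c: "e1 = m * c" using e1(2) by (auto simp: dvd_def)
  have "pp g [^] (p ^ a) = g [^] (e1 * p ^ a)" unfolding pp_def using g by (simp add: nat_pow_pow)
  also have "e1 * p ^ a = (p ^ a * m) * c" using c by simp
  finally have "pp g [^] (p ^ a) = g [^] ((p ^ a * m) * c)" .
  also have "\<dots> = (g [^] (p ^ a * m)) [^] c" using g by (simp only: nat_pow_pow)
  also have "\<dots> = \<one>" using pow_order_G[OF g] by simp
  finally show ?thesis .
qed

lemma qq_pow: assumes g: "g \<in> carrier G" shows "qq g [^] m = \<one>"
proof -
  obtain c where c: "e2 = p ^ a * c" using e2(2) by (auto simp: dvd_def)
  have "qq g [^] m = g [^] (e2 * m)" unfolding qq_def using g by (simp add: nat_pow_pow)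
  also have "e2 * m = (p ^ a * m) * c" using c by simp
  finally have "qq g [^] m = g [^] ((p ^ a * m) * c)" .
  also have "\<dots> = (g [^] (p ^ a * m)) [^] c" using g by (simp only: nat_pow_pow)
  also have "\<dots> = \<one>" using pow_order_G[OF g] by simp
  finally show ?thesis .
qed

lemma pp_prod:
  assumes u: "u \<in> carrier G" and w: "w \<in> carrier G" and c: "u \<otimes> w = w \<otimes> u"
    and up: "u [^] (p ^ a) = \<one>" and wm: "w [^] m = \<one>"
  shows "pp (u \<otimes> w) = u" and "qq (u \<otimes> w) = w"
proof -
  have "pp (u \<otimes> w) = u [^] e1 \<otimes> w [^] e1" unfolding pp_def using pow_mult_distrib[OF c u w] .
  moreover have "u [^] e1 = u [^] (1::nat)" by (rule pow_cong_ord[OF u up e1(1)])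
  moreover have "w [^] e1 = w [^] (0::nat)" by (rule pow_cong_ord[OF w wm]) (use e1(2) in simp)
  ultimately show "pp (u \<otimes> w) = u" using u w by simp
  have "qq (u \<otimes> w) = u [^] e2 \<otimes> w [^] e2" unfolding qq_def using pow_mult_distrib[OF c u w] .
  moreover have "u [^] e2 = u [^] (0::nat)" by (rule pow_cong_ord[OF u up]) (use e2(2) in simp)
  moreover have "w [^] e2 = w [^] (1::nat)" by (rule pow_cong_ord[OF w wm e2(1)])
  ultimately show "qq (u \<otimes> w) = w" using u w by simp
qed

lemma pp_in: "subgroup K G \<Longrightarrow> g \<in> K \<Longrightarrow> pp g \<in> K"
  unfolding pp_def using nat_pow_in_subgroup by blast
lemma qq_in: "subgroup K G \<Longrightarrow> g \<in> K \<Longrightarrow> qq g \<in> K"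
  unfolding qq_def using nat_pow_in_subgroup by blast

lemma fiber_pp:
  assumes K: "subgroup K G" and u: "u \<in> K" and up: "u [^] (p ^ a) = \<one>"
  shows "card {g \<in> K. pp g = u} = card (proots G (cent G K u) m)"
proof -
  have Kc: "K \<subseteq> carrier G" using subgroup.subset[OF K] .
  have uc: "u \<in> carrier G" using u Kc by auto
  have eq: "{g \<in> K. pp g = u} = (\<lambda>w. u \<otimes> w) ` proots G (cent G K u) m"
  proof (rule Set.set_eqI, rule iffI)
    fix g assume "g \<in> {g \<in> K. pp g = u}"
    then have g: "g \<in> K" "pp g = u" by auto
    have gc: "g \<in> carrier G" using g Kc by auto
    have "qq g \<in> proots G (cent G K u) m" unfolding proots_def cent_def
      using qq_in[OF K g(1)] qq_pow[OF gc] pp_qq_comm[OF gc] g(2) by auto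
    moreover have "g = u \<otimes> qq g" using pp_qq[OF gc] g(2) by simp
    ultimately show "g \<in> (\<lambda>w. u \<otimes> w) ` proots G (cent G K u) m" by blast
  next
    fix g assume "g \<in> (\<lambda>w. u \<otimes> w) ` proots G (cent G K u) m"
    then obtain w where w: "w \<in> K" "w \<otimes> u = u \<otimes> w" "w [^] m = \<one>" "g = u \<otimes> w"
      unfolding proots_def cent_def by auto
    have wc: "w \<in> carrier G" using w Kc by auto
    have "pp (u \<otimes> w) = u" using pp_prod(1)[OF uc wc w(2)[symmetric] up w(3)] .
    moreover have "u \<otimes> w \<in> K" using subgroup.m_closed[OF K u w(1)] .
    ultimately show "g \<in> {g \<in> K. pp g = u}" using w(4) by simp
  qed
  have "inj_on (\<lambda>w. u \<otimes> w) (proots G (cent G K u) m)"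
  proof (rule inj_onI)
    fix x z assume "x \<in> proots G (cent G K u) m" "z \<in> proots G (cent G K u) m" "u \<otimes> x = u \<otimes> z"
    moreover have "x \<in> carrier G" "z \<in> carrier G" using calculation(1,2) Kc unfolding proots_def cent_def by auto
    ultimately show "x = z" using l_cancel[where c=u] uc by blast
  qed
  then show ?thesis using eq card_image by simp
qed

lemma count_by_pp:
  assumes K: "subgroup K G" and U: "U \<subseteq> {u \<in> K. u [^] (p ^ a) = \<one>}"
  shows "card {g \<in> K. pp g \<in> U} = (\<Sum>u\<in>U. card (proots G (cent G K u) m))"
proof -
  have Kc: "K \<subseteq> carrier G" using subgroup.subset[OF K] .
  have fK: "finite K" using finite_subset[OF Kc fin] .
  have fU: "finite U" using finite_subset[OF _ fK] U by blast
  have "{g \<in> K. pp g \<in> U} = (\<Union>u\<in>U. {g \<in> K. pp g = u})" by auto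
  moreover have "card (\<Union>u\<in>U. {g \<in> K. pp g = u}) = (\<Sum>u\<in>U. card {g \<in> K. pp g = u})"
    by (rule card_UN_disjoint[OF fU]) (use fK in auto)
  ultimately have "card {g \<in> K. pp g \<in> U} = (\<Sum>u\<in>U. card {g \<in> K. pp g = u})" by simp
  also have "\<dots> = (\<Sum>u\<in>U. card (proots G (cent G K u) m))"
    by (rule sum.cong) (use fiber_pp[OF K] U in auto)
  finally show ?thesis .
qed

lemma pow_mps_iff:
  assumes g: "g \<in> carrier G"
  shows "(g [^] (m * p ^ s) = \<one>) = (pp g [^] (p ^ s) = \<one>)"
proof -
  define u where "u = pp g"
  define w where "w = qq g"
  have uc: "u \<in> carrier G" and wc: "w \<in> carrier G" using g u_def w_def by auto
  have "g [^] (m * p ^ s) = (u \<otimes> w) [^] (m * p ^ s)" using pp_qq[OF g] u_def w_def by simp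
  also have "\<dots> = u [^] (m * p ^ s) \<otimes> w [^] (m * p ^ s)"
    using pow_mult_distrib[OF _ uc wc] pp_qq_comm[OF g] u_def w_def by simp
  also have "w [^] (m * p ^ s) = (w [^] m) [^] (p ^ s)" using wc by (simp add: nat_pow_pow)
  also have "w [^] m = \<one>" using qq_pow[OF g] w_def by simp
  finally have e: "g [^] (m * p ^ s) = u [^] (m * p ^ s)" using uc by simp
  obtain i where i: "ord u = p ^ i" using pelem_ord[OF uc] pp_pow[OF g] u_def by auto
  have "coprime p m" by (rule prime_imp_coprime[OF p ndvd_m])
  then have cop: "coprime (ord u) m" using i by simp
  have "(u [^] (m * p ^ s) = \<one>) = (ord u dvd m * p ^ s)" using pow_eq_id[OF uc] .
  also have "\<dots> = (ord u dvd p ^ s)" using cop by (simp add: coprime_dvd_mult_right_iff)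
  also have "\<dots> = (u [^] (p ^ s) = \<one>)" using pow_eq_id[OF uc] by simp
  finally show ?thesis using e u_def by simp
qed

end

context cyc_sylow begin

definition "ccl K u = (\<lambda>k. k \<otimes> u \<otimes> inv k) ` K"

lemma ccl_sub:
  assumes K: "subgroup K G" and u: "u \<in> K" shows "ccl K u \<subseteq> K"
proof
  fix x assume "x \<in> ccl K u"
  then obtain k where k: "k \<in> K" "x = k \<otimes> u \<otimes> inv k" unfolding ccl_def by auto
  show "x \<in> K" using k subgroup.m_closed[OF K] subgroup.m_inv_closed[OF K] u by simp
qed

lemma ccl_self:
  assumes K: "subgroup K G" and u: "u \<in> K" shows "u \<in> ccl K u"
proof -
  have uc: "u \<in> carrier G" using u subgroup.mem_carrier[OF K] by auto
  have "\<one> \<otimes> u \<otimes> inv \<one> = u" using uc by simp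
  then show ?thesis unfolding ccl_def using subgroup.one_closed[OF K] by force
qed

lemma ccl_sym:
  assumes K: "subgroup K G" and u: "u \<in> K" and v: "v \<in> ccl K u" shows "u \<in> ccl K v"
proof -
  obtain k where k: "k \<in> K" "v = k \<otimes> u \<otimes> inv k" using v unfolding ccl_def by auto
  have kc: "k \<in> carrier G" and uc: "u \<in> carrier G" using k u subgroup.mem_carrier[OF K] by auto
  have "inv k \<otimes> v \<otimes> inv (inv k) = u" using conj_cancel1[OF kc uc] k(2) kc by simp
  then show ?thesis unfolding ccl_def using subgroup.m_inv_closed[OF K k(1)] by force
qed

lemma ccl_trans:
  assumes K: "subgroup K G" and u: "u \<in> K" and v: "v \<in> ccl K u" and w: "w \<in> ccl K v"
  shows "w \<in> ccl K u"
proof -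
  obtain k where k: "k \<in> K" "v = k \<otimes> u \<otimes> inv k" using v unfolding ccl_def by auto
  obtain l where l: "l \<in> K" "w = l \<otimes> v \<otimes> inv l" using w unfolding ccl_def by auto
  have c: "k \<in> carrier G" "l \<in> carrier G" "u \<in> carrier G" using k l u subgroup.mem_carrier[OF K] by auto
  have "w = (l \<otimes> k) \<otimes> u \<otimes> inv (l \<otimes> k)" using l(2) k(2) conj_comp[OF c(2) c(1) c(3)] by simp
  then show ?thesis unfolding ccl_def using subgroup.m_closed[OF K l(1) k(1)] by force
qed

lemma ccl_eq:
  assumes K: "subgroup K G" and u: "u \<in> K" and v: "v \<in> ccl K u" shows "ccl K v = ccl K u"
proof -
  have vK: "v \<in> K" using ccl_sub[OF K u] v by auto
  show ?thesis
    using ccl_trans[OF K u v] ccl_trans[OF K vK ccl_sym[OF K u v]] by blast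
qed

lemma conj_eq_crit:
  assumes k: "k \<in> carrier G" and k': "k' \<in> carrier G" and u: "u \<in> carrier G"
  shows "(k \<otimes> u \<otimes> inv k = k' \<otimes> u \<otimes> inv k') = ((inv k \<otimes> k') \<otimes> u = u \<otimes> (inv k \<otimes> k'))"
proof -
  have ik: "inv k \<in> carrier G" using k by simp
  have "(k \<otimes> u \<otimes> inv k = k' \<otimes> u \<otimes> inv k') =
        (inv k \<otimes> (k \<otimes> u \<otimes> inv k) \<otimes> inv (inv k) = inv k \<otimes> (k' \<otimes> u \<otimes> inv k') \<otimes> inv (inv k))"
    using conj_eq_iff[OF ik] k k' u by simp
  also have "inv k \<otimes> (k \<otimes> u \<otimes> inv k) \<otimes> inv (inv k) = u" using conj_cancel1[OF k u] k by simp
  also have "inv k \<otimes> (k' \<otimes> u \<otimes> inv k') \<otimes> inv (inv k) = (inv k \<otimes> k') \<otimes> u \<otimes> inv (inv k \<otimes> k')"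
    using conj_comp[OF ik k' u] by simp
  also have "(u = (inv k \<otimes> k') \<otimes> u \<otimes> inv (inv k \<otimes> k')) = ((inv k \<otimes> k') \<otimes> u = u \<otimes> (inv k \<otimes> k'))"
    using conj_commute_iff[of "inv k \<otimes> k'" u] k k' u by auto
  finally show ?thesis .
qed

lemma card_ccl:
  assumes K: "subgroup K G" and u: "u \<in> K"
  shows "card (ccl K u) * card (cent G K u) = card K"
  unfolding ccl_def
proof (rule orbit_stab_general[OF K])
  have Kc: "K \<subseteq> carrier G" using subgroup.subset[OF K] .
  show "finite K" using finite_subset[OF Kc fin] .
  show "cent G K u \<subseteq> K" unfolding cent_def by auto
  fix h h' assume h: "h \<in> K" "h' \<in> K"
  have c: "h \<in> carrier G" "h' \<in> carrier G" "u \<in> carrier G" using h u Kc by auto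
  have "inv h \<otimes> h' \<in> K" using subgroup.m_closed[OF K subgroup.m_inv_closed[OF K h(1)] h(2)] .
  then show "(h \<otimes> u \<otimes> inv h = h' \<otimes> u \<otimes> inv h') = (inv h \<otimes> h' \<in> cent G K u)"
    unfolding cent_def using conj_eq_crit[OF c] by simp
qed

lemma ccl_pos: assumes K: "subgroup K G" and u: "u \<in> K" shows "card (ccl K u) > 0"
proof -
  have "finite (ccl K u)" using finite_subset[OF ccl_sub[OF K u] finite_subset[OF subgroup.subset[OF K] fin]] .
  then show ?thesis using ccl_self[OF K u] card_gt_0_iff by blast
qed

lemma conj_image_cent:
  assumes K: "subgroup K G" and u: "u \<in> K" and g: "g \<in> K"
  shows "(\<lambda>w. g \<otimes> w \<otimes> inv g) ` proots G (cent G K u) M = proots G (cent G K (g \<otimes> u \<otimes> inv g)) M"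
    and "(\<lambda>w. g \<otimes> w \<otimes> inv g) ` cent G K u = cent G K (g \<otimes> u \<otimes> inv g)"
proof -
  have Kc: "K \<subseteq> carrier G" using subgroup.subset[OF K] .
  have gc: "g \<in> carrier G" and uc: "u \<in> carrier G" using g u Kc by auto
  have inK: "g \<otimes> w \<otimes> inv g \<in> K" if "w \<in> K" for w
    using subgroup.m_closed[OF K subgroup.m_closed[OF K g that] subgroup.m_inv_closed[OF K g]] .
  have fwd: "(g \<otimes> w \<otimes> inv g) \<otimes> (g \<otimes> u \<otimes> inv g) = (g \<otimes> u \<otimes> inv g) \<otimes> (g \<otimes> w \<otimes> inv g)"
    if "w \<in> carrier G" "w \<otimes> u = u \<otimes> w" for w
    using conj_mult[OF gc that(1) uc] conj_mult[OF gc uc that(1)] that(2) by simp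
  have bwd: "w \<otimes> u = u \<otimes> w" if "w \<in> carrier G"
      "(g \<otimes> w \<otimes> inv g) \<otimes> (g \<otimes> u \<otimes> inv g) = (g \<otimes> u \<otimes> inv g) \<otimes> (g \<otimes> w \<otimes> inv g)" for w
  proof -
    have "g \<otimes> (w \<otimes> u) \<otimes> inv g = g \<otimes> (u \<otimes> w) \<otimes> inv g"
      using conj_mult[OF gc that(1) uc] conj_mult[OF gc uc that(1)] that(2) by simp
    then show ?thesis using conj_eq_iff[OF gc] that(1) uc by simp
  qed
  have powc: "((g \<otimes> w \<otimes> inv g) [^] M = \<one>) = (w [^] M = \<one>)" if "w \<in> carrier G" for w
    using conj_pow[OF gc that, of M] conj_one_iff[OF gc] that by simp
  have bk: "x = g \<otimes> (inv g \<otimes> x \<otimes> g) \<otimes> inv g" if "x \<in> carrier G" for x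
    using conj_cancel2[OF gc that] by simp
  have ibK: "inv g \<otimes> x \<otimes> g \<in> K" if "x \<in> K" for x
    using subgroup.m_closed[OF K subgroup.m_closed[OF K subgroup.m_inv_closed[OF K g] that] g] .
  show "(\<lambda>w. g \<otimes> w \<otimes> inv g) ` cent G K u = cent G K (g \<otimes> u \<otimes> inv g)"
  proof (rule Set.set_eqI, rule iffI)
    fix x assume "x \<in> (\<lambda>w. g \<otimes> w \<otimes> inv g) ` cent G K u"
    then obtain w where w: "w \<in> K" "w \<otimes> u = u \<otimes> w" "x = g \<otimes> w \<otimes> inv g" unfolding cent_def by auto
    have wc: "w \<in> carrier G" using w Kc by auto
    show "x \<in> cent G K (g \<otimes> u \<otimes> inv g)" unfolding cent_def using inK[OF w(1)] fwd[OF wc w(2)] w(3) by simp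
  next
    fix x assume "x \<in> cent G K (g \<otimes> u \<otimes> inv g)"
    then have x: "x \<in> K" "x \<otimes> (g \<otimes> u \<otimes> inv g) = (g \<otimes> u \<otimes> inv g) \<otimes> x" unfolding cent_def by auto
    have xc: "x \<in> carrier G" using x Kc by auto
    define w where "w = inv g \<otimes> x \<otimes> g"
    have wc: "w \<in> carrier G" using xc gc w_def by simp
    have xw: "x = g \<otimes> w \<otimes> inv g" using bk[OF xc] w_def by simp
    have "w \<otimes> u = u \<otimes> w" using bwd[OF wc] x(2) xw by simp
    then have "w \<in> cent G K u" unfolding cent_def using ibK[OF x(1)] w_def by simp
    then show "x \<in> (\<lambda>w. g \<otimes> w \<otimes> inv g) ` cent G K u" using xw by blast
  qed
  show "(\<lambda>w. g \<otimes> w \<otimes> inv g) ` proots G (cent G K u) M = proots G (cent G K (g \<otimes> u \<otimes> inv g)) M"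
  proof (rule Set.set_eqI, rule iffI)
    fix x assume "x \<in> (\<lambda>w. g \<otimes> w \<otimes> inv g) ` proots G (cent G K u) M"
    then obtain w where w: "w \<in> K" "w \<otimes> u = u \<otimes> w" "w [^] M = \<one>" "x = g \<otimes> w \<otimes> inv g"
      unfolding cent_def proots_def by auto
    have wc: "w \<in> carrier G" using w Kc by auto
    show "x \<in> proots G (cent G K (g \<otimes> u \<otimes> inv g)) M" unfolding cent_def proots_def
      using inK[OF w(1)] fwd[OF wc w(2)] w(3,4) powc[OF wc] by simp
  next
    fix x assume "x \<in> proots G (cent G K (g \<otimes> u \<otimes> inv g)) M"
    then have x: "x \<in> K" "x \<otimes> (g \<otimes> u \<otimes> inv g) = (g \<otimes> u \<otimes> inv g) \<otimes> x" "x [^] M = \<one>"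
      unfolding cent_def proots_def by auto
    have xc: "x \<in> carrier G" using x Kc by auto
    define w where "w = inv g \<otimes> x \<otimes> g"
    have wc: "w \<in> carrier G" using xc gc w_def by simp
    have xw: "x = g \<otimes> w \<otimes> inv g" using bk[OF xc] w_def by simp
    have "w \<otimes> u = u \<otimes> w" using bwd[OF wc] x(2) xw by simp
    moreover have "w [^] M = \<one>" using powc[OF wc] x(3) xw by simp
    ultimately have "w \<in> proots G (cent G K u) M" unfolding cent_def proots_def using ibK[OF x(1)] w_def by simp
    then show "x \<in> (\<lambda>w. g \<otimes> w \<otimes> inv g) ` proots G (cent G K u) M" using xw by blast
  qed
qed

lemma conj_card_cent:
  assumes K: "subgroup K G" and u: "u \<in> K" and g: "g \<in> K"
  shows "card (proots G (cent G K (g \<otimes> u \<otimes> inv g)) M) = card (proots G (cent G K u) M)"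
    and "card (cent G K (g \<otimes> u \<otimes> inv g)) = card (cent G K u)"
proof -
  have Kc: "K \<subseteq> carrier G" using subgroup.subset[OF K] .
  have gc: "g \<in> carrier G" using g Kc by auto
  have s1: "proots G (cent G K u) M \<subseteq> carrier G" and s2: "cent G K u \<subseteq> carrier G"
    unfolding proots_def cent_def using Kc by auto
  show "card (proots G (cent G K (g \<otimes> u \<otimes> inv g)) M) = card (proots G (cent G K u) M)"
    using card_conj_image[OF s1 gc] conj_image_cent(1)[OF K u g] by simp
  show "card (cent G K (g \<otimes> u \<otimes> inv g)) = card (cent G K u)"
    using card_conj_image[OF s2 gc] conj_image_cent(2)[OF K u g] by simp
qed

lemma normK_mono: "normK G K P \<subseteq> normK G (carrier G) P" if "K \<subseteq> carrier G"
  using that unfolding normK_def by auto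

lemma centK_sub_normK:
  assumes K: "subgroup K G" shows "centK G K P \<subseteq> normK G K P"
proof
  fix k assume k: "k \<in> centK G K P"
  then have kK: "k \<in> K" and kc: "k \<in> carrier G" using subgroup.mem_carrier[OF K] unfolding centK_def by auto
  have "(\<lambda>s. k \<otimes> s \<otimes> inv k) ` P = (\<lambda>s. s) ` P"
  proof (rule image_cong)
    fix s assume s: "s \<in> P"
    have sc: "s \<in> carrier G" using s Pc by auto
    have "k \<otimes> s = s \<otimes> k" using k s unfolding centK_def by auto
    then show "k \<otimes> s \<otimes> inv k = s" using iffD2[OF conj_commute_iff[OF kc sc]] by simp
  qed simp
  then show "k \<in> normK G K P" unfolding normK_def using kK by simp
qed

lemma norm_orbit:
  assumes K: "subgroup K G" and PK: "P \<subseteq> K" and v: "v \<in> P" and v1: "v \<noteq> \<one>"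
  shows "card ((\<lambda>n. n \<otimes> v \<otimes> inv n) ` normK G K P) * card (centK G K P) = card (normK G K P)"
proof (rule orbit_stab_general)
  have Kc: "K \<subseteq> carrier G" using subgroup.subset[OF K] .
  show NS: "subgroup (normK G K P) G" using normK_subgroup[OF K Pc] .
  show "finite (normK G K P)" using finite_subset[OF subgroup.subset[OF NS] fin] .
  show "centK G K P \<subseteq> normK G K P" using centK_sub_normK[OF K] .
  fix h h' assume h: "h \<in> normK G K P" "h' \<in> normK G K P"
  have c: "h \<in> carrier G" "h' \<in> carrier G" "v \<in> carrier G" using h v Pc subgroup.mem_carrier[OF NS] by auto
  have hN: "inv h \<otimes> h' \<in> normK G K P" using subgroup.m_closed[OF NS subgroup.m_inv_closed[OF NS h(1)] h(2)] .
  have hK: "inv h \<otimes> h' \<in> K" using hN unfolding normK_def by auto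
  have "(inv h \<otimes> h' \<otimes> v = v \<otimes> (inv h \<otimes> h')) = (inv h \<otimes> h' \<in> centK G K P)"
  proof
    assume "inv h \<otimes> h' \<otimes> v = v \<otimes> (inv h \<otimes> h')"
    then have "\<forall>q\<in>P. inv h \<otimes> h' \<otimes> q = q \<otimes> (inv h \<otimes> h')"
      using aut_trivial[OF subsetD[OF normK_mono[OF Kc] hN] v v1] by blast
    then show "inv h \<otimes> h' \<in> centK G K P" unfolding centK_def using hK by simp
  next
    assume "inv h \<otimes> h' \<in> centK G K P"
    then show "inv h \<otimes> h' \<otimes> v = v \<otimes> (inv h \<otimes> h')" unfolding centK_def using v by simp
  qed
  then show "(h \<otimes> v \<otimes> inv h = h' \<otimes> v \<otimes> inv h') = (inv h \<otimes> h' \<in> centK G K P)"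
    using conj_eq_crit[OF c] by simp
qed

end

context cyc_sylow begin

lemma class_count:
  assumes K: "subgroup K G" and PK: "P \<subseteq> K" and VP: "V \<subseteq> P" and V1: "\<one> \<notin> V"
    and Vcl: "\<And>v k. v \<in> V \<Longrightarrow> k \<in> K \<Longrightarrow> k \<otimes> v \<otimes> inv k \<in> P \<Longrightarrow> k \<otimes> v \<otimes> inv k \<in> V"
  shows "(\<Sum>u\<in>{u\<in>K. ccl K u \<inter> V \<noteq> {}}. card (cent G K u)) * card (normK G K P)
           = card K * card V * card (centK G K P)"
proof -
  define Xs where "Xs = {u\<in>K. ccl K u \<inter> V \<noteq> {}}"
  define Nn where "Nn = card (normK G K P)"
  define Cc where "Cc = card (centK G K P)"
  have Kc: "K \<subseteq> carrier G" using subgroup.subset[OF K] .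
  have fK: "finite K" using finite_subset[OF Kc fin] .
  have XK: "Xs \<subseteq> K" unfolding Xs_def by auto
  have fX: "finite Xs" using finite_subset[OF XK fK] .
  have fV: "finite V" using finite_subset[OF VP finite_subset[OF Pc fin]] .
  have VK: "V \<subseteq> K" using VP PK by auto
  have NS: "subgroup (normK G K P) G" using normK_subgroup[OF K Pc] .
  have CS: "subgroup (centK G K P) G" using centK_subgroup[OF K Pc] .
  have Cc0: "Cc > 0" unfolding Cc_def
    using subgroup.one_closed[OF CS] finite_subset[OF subgroup.subset[OF CS] fin] card_gt_0_iff by blast
  have Nn0: "Nn > 0" unfolding Nn_def
    using subgroup.one_closed[OF NS] finite_subset[OF subgroup.subset[OF NS] fin] card_gt_0_iff by blast
  have orb: "card (ccl K u \<inter> V) * Cc = Nn" if u: "u \<in> Xs" for u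
  proof -
    have uK: "u \<in> K" using u XK by auto
    obtain v where v: "v \<in> ccl K u" "v \<in> V" using u unfolding Xs_def by auto
    have vP: "v \<in> P" using v VP by auto
    have v1: "v \<noteq> \<one>" using v V1 by auto
    have vK: "v \<in> K" using vP PK by auto
    have vc: "v \<in> carrier G" using vK Kc by auto
    have cv: "ccl K v = ccl K u" using ccl_eq[OF K uK v(1)] .
    have "ccl K u \<inter> V = (\<lambda>n. n \<otimes> v \<otimes> inv n) ` normK G K P"
    proof (rule Set.set_eqI, rule iffI)
      fix w assume w: "w \<in> ccl K u \<inter> V"
      then have "w \<in> ccl K v" using cv by simp
      then obtain k where k: "k \<in> K" "w = k \<otimes> v \<otimes> inv k" unfolding ccl_def by auto
      have "w \<in> P" using w VP by auto
      then obtain n where "n \<in> normK G K P" "n \<otimes> v \<otimes> inv n = w"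
        using fusion[OF K PK vP _ k(1)] k(2) by metis
      then show "w \<in> (\<lambda>n. n \<otimes> v \<otimes> inv n) ` normK G K P" by force
    next
      fix w assume "w \<in> (\<lambda>n. n \<otimes> v \<otimes> inv n) ` normK G K P"
      then obtain n where n: "n \<in> normK G K P" "w = n \<otimes> v \<otimes> inv n" by auto
      have nK: "n \<in> K" using n(1) unfolding normK_def by auto
      have wP: "w \<in> P" using norm_conj_in[OF n(1) vP] n(2) by simp
      have "w \<in> V" using Vcl[OF v(2) nK] wP n(2) by simp
      moreover have "w \<in> ccl K v" unfolding ccl_def using n nK by auto
      ultimately show "w \<in> ccl K u \<inter> V" using cv by simp
    qed
    then show ?thesis using norm_orbit[OF K PK vP v1] unfolding Nn_def Cc_def by simp
  qed
  have inner: "(\<Sum>u\<in>{u \<in> Xs. v \<in> ccl K u}. 1 / rat_of_nat (card (ccl K u))) = 1" if v: "v \<in> V" for v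
  proof -
    have vK: "v \<in> K" using v VK by auto
    have e: "{u \<in> Xs. v \<in> ccl K u} = ccl K v"
    proof (rule Set.set_eqI, rule iffI)
      fix u assume "u \<in> {u \<in> Xs. v \<in> ccl K u}"
      then have "u \<in> K" "v \<in> ccl K u" using XK by auto
      then show "u \<in> ccl K v" using ccl_sym[OF K] by blast
    next
      fix u assume u: "u \<in> ccl K v"
      have uK: "u \<in> K" using ccl_sub[OF K vK] u by auto
      have "v \<in> ccl K u" using ccl_sym[OF K vK u] .
      then show "u \<in> {u \<in> Xs. v \<in> ccl K u}" unfolding Xs_def using uK v by auto
    qed
    have "(\<Sum>u\<in>ccl K v. 1 / rat_of_nat (card (ccl K u))) = (\<Sum>u\<in>ccl K v. 1 / rat_of_nat (card (ccl K v)))"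
      by (rule sum.cong) (use ccl_eq[OF K vK] in auto)
    also have "\<dots> = 1" using ccl_pos[OF K vK] by simp
    finally show ?thesis using e by simp
  qed
  have cardsum: "rat_of_nat (card (ccl K u \<inter> V)) = (\<Sum>v\<in>{v \<in> V. v \<in> ccl K u}. 1)" for u
  proof -
    have "ccl K u \<inter> V = {v \<in> V. v \<in> ccl K u}" by auto
    then show ?thesis by simp
  qed
  have "(\<Sum>u\<in>Xs. rat_of_nat (card (ccl K u \<inter> V)) / rat_of_nat (card (ccl K u)))
        = (\<Sum>u\<in>Xs. \<Sum>v\<in>{v \<in> V. v \<in> ccl K u}. 1 / rat_of_nat (card (ccl K u)))"
    by (rule sum.cong) (simp_all add: cardsum sum_divide_distrib)
  also have "\<dots> = (\<Sum>v\<in>V. \<Sum>u\<in>{u \<in> Xs. v \<in> ccl K u}. 1 / rat_of_nat (card (ccl K u)))"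
    by (rule sum.swap_restrict[OF fX fV])
  also have "\<dots> = (\<Sum>v\<in>V. 1)" by (rule sum.cong) (simp_all add: inner)
  finally have S1: "(\<Sum>u\<in>Xs. rat_of_nat (card (ccl K u \<inter> V)) / rat_of_nat (card (ccl K u))) = of_nat (card V)"
    by simp
  have "(\<Sum>u\<in>Xs. rat_of_nat (card (ccl K u \<inter> V)) / rat_of_nat (card (ccl K u)))
        = (\<Sum>u\<in>Xs. (of_nat Nn / of_nat Cc) * (1 / rat_of_nat (card (ccl K u))))"
  proof (rule sum.cong)
    fix u assume u: "u \<in> Xs"
    have "rat_of_nat (card (ccl K u \<inter> V)) = of_nat Nn / of_nat Cc"
      using orb[OF u] Cc0 by (simp add: field_simps flip: of_nat_mult)
    then show "rat_of_nat (card (ccl K u \<inter> V)) / rat_of_nat (card (ccl K u))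
               = (of_nat Nn / of_nat Cc) * (1 / rat_of_nat (card (ccl K u)))" by simp
  qed simp
  then have S2: "(of_nat Nn / of_nat Cc) * (\<Sum>u\<in>Xs. 1 / rat_of_nat (card (ccl K u))) = of_nat (card V)"
    using S1 by (simp add: sum_distrib_left)
  have "(\<Sum>u\<in>Xs. rat_of_nat (card (cent G K u))) = (\<Sum>u\<in>Xs. of_nat (card K) * (1 / rat_of_nat (card (ccl K u))))"
  proof (rule sum.cong)
    fix u assume u: "u \<in> Xs"
    have uK: "u \<in> K" using u XK by auto
    have "rat_of_nat (card (ccl K u)) * rat_of_nat (card (cent G K u)) = of_nat (card K)"
      using card_ccl[OF K uK] by (simp flip: of_nat_mult)
    then show "rat_of_nat (card (cent G K u)) = of_nat (card K) * (1 / rat_of_nat (card (ccl K u)))"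
      using ccl_pos[OF K uK] by (simp add: field_simps)
  qed simp
  also have "\<dots> = of_nat (card K) * (\<Sum>u\<in>Xs. 1 / rat_of_nat (card (ccl K u)))"
    by (simp add: sum_distrib_left)
  finally have S3: "(\<Sum>u\<in>Xs. rat_of_nat (card (cent G K u))) * of_nat Nn
                    = of_nat (card K) * of_nat (card V) * of_nat Cc"
    using S2 Nn0 Cc0 by (simp add: field_simps)
  have "rat_of_nat ((\<Sum>u\<in>Xs. card (cent G K u)) * Nn) = rat_of_nat (card K * card V * Cc)"
    using S3 by simp
  then have "(\<Sum>u\<in>Xs. card (cent G K u)) * Nn = card K * card V * Cc"
    using of_nat_eq_iff by blast
  then show ?thesis unfolding Xs_def Nn_def Cc_def .
qed

end

context cyc_sylow begin

lemma y_in_P: "y \<in> P" using Pgen generate.incl[of y "{y}" G] by simp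

lemma P_pelem: assumes "x \<in> P" shows "x [^] (p ^ a) = \<one>"
proof -
  obtain i where "x = y [^] (i::nat)" using assms P_img by auto
  then have "x [^] (p ^ a) = (y [^] (p ^ a)) [^] i" using y by (simp add: nat_pow_pow mult.commute)
  also have "y [^] (p ^ a) = \<one>" using pow_ord_eq_1[OF y] ord_y by simp
  finally show ?thesis by simp
qed

lemma central_conj_eq:
  assumes "g \<in> carrier G" "u \<in> carrier G" "g \<otimes> u = u \<otimes> g"
  shows "inv g \<otimes> u \<otimes> g = u"
proof -
  have "inv g \<otimes> u \<otimes> g = inv g \<otimes> (u \<otimes> g)" using assms by (simp add: m_assoc)
  also have "u \<otimes> g = g \<otimes> u" using assms(3) by simp
  also have "inv g \<otimes> (g \<otimes> u) = u" using assms(1,2) by simp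
  finally show ?thesis .
qed

lemma central_count:
  assumes K: "subgroup K G" and PK: "P \<subseteq> K" and z: "z \<in> P" and z1: "z \<noteq> \<one>"
    and zc: "\<forall>k\<in>K. k \<otimes> z = z \<otimes> k"
  shows "p ^ a * card (proots G K m) = card K"
  using assms
proof (induction "card K" arbitrary: K z rule: less_induct)
  case less
  note K = less.prems(1) and PK = less.prems(2) and z = less.prems(3) and z1 = less.prems(4)
    and zc = less.prems(5)
  have Kc: "K \<subseteq> carrier G" using subgroup.subset[OF K] .
  have fK: "finite K" using finite_subset[OF Kc fin] .
  define Xp where "Xp = {u \<in> K. u [^] (p ^ a) = \<one>}"
  define Z where "Z = {u \<in> Xp. \<forall>k\<in>K. k \<otimes> u = u \<otimes> k}"
  define Y where "Y = Xp - Z"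
  define c where "c = card (proots G K m)"
  have fXp: "finite Xp" using finite_subset[OF _ fK] unfolding Xp_def by auto
  have ZXp: "Z \<subseteq> Xp" unfolding Z_def by auto
  have fZ: "finite Z" using finite_subset[OF ZXp fXp] .
  have fY: "finite Y" unfolding Y_def using fXp by auto
  have allK: "{g \<in> K. pp g \<in> Xp} = K" unfolding Xp_def
    using pp_in[OF K] pp_pow Kc by auto
  have cK: "card K = (\<Sum>u\<in>Xp. card (proots G (cent G K u) m))"
    using count_by_pp[OF K, of Xp] allK unfolding Xp_def by auto
  also have "\<dots> = (\<Sum>u\<in>Y. card (proots G (cent G K u) m)) + (\<Sum>u\<in>Z. card (proots G (cent G K u) m))"
    unfolding Y_def by (rule sum.subset_diff[OF ZXp fXp])
  also have "(\<Sum>u\<in>Z. card (proots G (cent G K u) m)) = card Z * c"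
  proof -
    have "cent G K u = K" if "u \<in> Z" for u using that unfolding Z_def cent_def by auto
    then show ?thesis unfolding c_def by simp
  qed
  finally have cK2: "card K = (\<Sum>u\<in>Y. card (proots G (cent G K u) m)) + card Z * c" .
  have conjP: "\<exists>g\<in>K. inv g \<otimes> u \<otimes> g \<in> P" if "u \<in> Xp" for u
    using pelem_conj[OF K PK] that unfolding Xp_def by auto
  have central_pres: "u \<in> Z" if u: "u \<in> K" and g: "g \<in> K" and w: "inv g \<otimes> u \<otimes> g \<in> Z" for u g
  proof -
    have gc: "g \<in> carrier G" and uc: "u \<in> carrier G" using u g Kc by auto
    have "\<forall>k\<in>K. k \<otimes> (inv g \<otimes> u \<otimes> g) = (inv g \<otimes> u \<otimes> g) \<otimes> k" using w unfolding Z_def by auto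
    then have gcomm: "g \<otimes> (inv g \<otimes> u \<otimes> g) = (inv g \<otimes> u \<otimes> g) \<otimes> g" using g by blast
    have "inv g \<otimes> u \<otimes> g = u"
    proof -
      have "g \<otimes> (inv g \<otimes> u \<otimes> g) = u \<otimes> g" using gc uc by (simp add: m_assoc)
      then have "(inv g \<otimes> u \<otimes> g) \<otimes> g = u \<otimes> g" using gcomm by simp
      then show ?thesis using gc uc r_cancel by (metis m_closed inv_closed)
    qed
    then show ?thesis using w by simp
  qed
  have ZP: "Z \<subseteq> P"
  proof
    fix u assume u: "u \<in> Z"
    then have uX: "u \<in> Xp" and uK: "u \<in> K" unfolding Z_def Xp_def by auto
    obtain g where g: "g \<in> K" "inv g \<otimes> u \<otimes> g \<in> P" using conjP[OF uX] by blast
    have "g \<otimes> u = u \<otimes> g" using u g(1) unfolding Z_def by auto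
    then have "inv g \<otimes> u \<otimes> g = u" using central_conj_eq g(1) uK Kc by auto
    then show "u \<in> P" using g(2) by simp
  qed
  have PXp: "P \<subseteq> Xp" unfolding Xp_def using PK P_pelem by auto
  have oneZ: "\<one> \<in> Z" unfolding Z_def Xp_def using subgroup.one_closed[OF K] Kc by auto
  define V where "V = P - Z"
  have cardV: "card V = p ^ a - card Z" unfolding V_def
    using card_Diff_subset[OF fZ ZP] Pcard by simp
  have cardZle: "card Z \<le> p ^ a" using card_mono[OF finite_subset[OF Pc fin] ZP] Pcard by simp
  have IHY: "p ^ a * card (proots G (cent G K u) m) = card (cent G K u)" if u: "u \<in> Y" for u
  proof -
    have uX: "u \<in> Xp" and uZ: "u \<notin> Z" using u unfolding Y_def by auto
    have uK: "u \<in> K" using uX unfolding Xp_def by auto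
    obtain g where g: "g \<in> K" "inv g \<otimes> u \<otimes> g \<in> P" using conjP[OF uX] by blast
    define v where "v = inv g \<otimes> u \<otimes> g"
    have gc: "g \<in> carrier G" and uc: "u \<in> carrier G" using g uK Kc by auto
    have vP: "v \<in> P" using g(2) v_def by simp
    have vK: "v \<in> K" using vP PK by auto
    have vc: "v \<in> carrier G" using vK Kc by auto
    have uv: "u = g \<otimes> v \<otimes> inv g" using conj_cancel2[OF gc uc] v_def by simp
    have vZ: "v \<notin> Z" using central_pres[OF uK g(1)] uZ v_def by blast
    have v1: "v \<noteq> \<one>" using vZ oneZ by auto
    define K' where "K' = cent G K v"
    have K': "subgroup K' G" unfolding K'_def using cent_subgroup[OF K vc] .
    have PK': "P \<subseteq> K'" unfolding K'_def cent_def using PK P_comm vP by auto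
    have vcen: "\<forall>k\<in>K'. k \<otimes> v = v \<otimes> k" unfolding K'_def cent_def by auto
    have K'K: "K' \<subseteq> K" unfolding K'_def cent_def by auto
    have "K' \<noteq> K"
    proof
      assume "K' = K"
      then have "\<forall>k\<in>K. k \<otimes> v = v \<otimes> k" using vcen by simp
      moreover have "v \<in> Xp" using vP PXp by auto
      ultimately have "v \<in> Z" unfolding Z_def by auto
      then show False using vZ by simp
    qed
    then have lt: "card K' < card K" using psubset_card_mono[OF fK] K'K by auto
    have "p ^ a * card (proots G K' m) = card K'"
      using less.hyps[OF lt K' PK' vP v1 vcen] .
    moreover have "card (proots G (cent G K u) m) = card (proots G K' m)"
      unfolding K'_def using conj_card_cent(1)[OF K vK g(1)] uv by simp
    moreover have "card (cent G K u) = card K'"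
      unfolding K'_def using conj_card_cent(2)[OF K vK g(1)] uv by simp
    ultimately show ?thesis by simp
  qed
  have NC: "normK G K P = centK G K P"
  proof
    show "centK G K P \<subseteq> normK G K P" using centK_sub_normK[OF K] .
    show "normK G K P \<subseteq> centK G K P"
    proof
      fix n assume n: "n \<in> normK G K P"
      have nK: "n \<in> K" using n unfolding normK_def by auto
      have "n \<otimes> z = z \<otimes> n" using zc nK by auto
      then have "\<forall>q\<in>P. n \<otimes> q = q \<otimes> n" using aut_trivial[OF subsetD[OF normK_mono[OF Kc] n] z z1] by blast
      then show "n \<in> centK G K P" unfolding centK_def using nK by auto
    qed
  qed
  have CS: "subgroup (centK G K P) G" using centK_subgroup[OF K Pc] .
  have C0: "card (centK G K P) > 0"
    using subgroup.one_closed[OF CS] finite_subset[OF subgroup.subset[OF CS] fin] card_gt_0_iff by blast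
  have VP: "V \<subseteq> P" unfolding V_def by auto
  have V1: "\<one> \<notin> V" unfolding V_def using oneZ by auto
  have Vcl: "k \<otimes> v \<otimes> inv k \<in> V" if v: "v \<in> V" and k: "k \<in> K" and kv: "k \<otimes> v \<otimes> inv k \<in> P" for v k
  proof -
    have kc: "k \<in> carrier G" using k Kc by auto
    have vK: "v \<in> K" using v VP PK by auto
    have vc: "v \<in> carrier G" using vK Kc by auto
    have wK: "k \<otimes> v \<otimes> inv k \<in> K" using kv PK by auto
    have ik: "inv k \<in> K" using subgroup.m_inv_closed[OF K k] .
    have e: "inv (inv k) \<otimes> v \<otimes> inv k = k \<otimes> v \<otimes> inv k" using kc by simp
    have "k \<otimes> v \<otimes> inv k \<notin> Z"
    proof
      assume "k \<otimes> v \<otimes> inv k \<in> Z"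
      then have "v \<in> Z" using central_pres[OF vK ik] e by simp
      then show False using v unfolding V_def by simp
    qed
    then show ?thesis unfolding V_def using kv by simp
  qed
  have Yeq: "Y = {u \<in> K. ccl K u \<inter> V \<noteq> {}}"
  proof (rule Set.set_eqI, rule iffI)
    fix u assume u: "u \<in> Y"
    have uX: "u \<in> Xp" and uZ: "u \<notin> Z" using u unfolding Y_def by auto
    have uK: "u \<in> K" using uX unfolding Xp_def by auto
    obtain g where g: "g \<in> K" "inv g \<otimes> u \<otimes> g \<in> P" using conjP[OF uX] by blast
    have gc: "g \<in> carrier G" using g Kc by auto
    have vZ: "inv g \<otimes> u \<otimes> g \<notin> Z" using central_pres[OF uK g(1)] uZ by blast
    have "inv g \<otimes> u \<otimes> g = inv g \<otimes> u \<otimes> inv (inv g)" using gc by simp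
    then have "inv g \<otimes> u \<otimes> g \<in> ccl K u" unfolding ccl_def using subgroup.m_inv_closed[OF K g(1)] by force
    then show "u \<in> {u \<in> K. ccl K u \<inter> V \<noteq> {}}" using uK g(2) vZ unfolding V_def by auto
  next
    fix u assume "u \<in> {u \<in> K. ccl K u \<inter> V \<noteq> {}}"
    then obtain w where u: "u \<in> K" and w: "w \<in> ccl K u" "w \<in> V" by auto
    obtain k where k: "k \<in> K" "w = k \<otimes> u \<otimes> inv k" using w(1) unfolding ccl_def by auto
    have kc: "k \<in> carrier G" and uc: "u \<in> carrier G" using k u Kc by auto
    have wP: "w \<in> P" using w(2) unfolding V_def by auto
    have "(k \<otimes> u \<otimes> inv k) [^] (p ^ a) = \<one>" using P_pelem[OF wP] k(2) by simp
    then have "u [^] (p ^ a) = \<one>" using conj_pow[OF kc uc] conj_one_iff[OF kc] uc by simp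
    then have uX: "u \<in> Xp" unfolding Xp_def using u by simp
    have ik: "inv k \<in> K" using subgroup.m_inv_closed[OF K k(1)] .
    have wK: "w \<in> K" using wP PK by auto
    have "u \<notin> Z"
    proof
      assume uZ: "u \<in> Z"
      have "inv k \<otimes> w \<otimes> k = u" using k(2) conj_cancel1[OF kc uc] by simp
      then have "w \<in> Z" using central_pres[OF wK k(1)] uZ by simp
      then show False using w(2) unfolding V_def by simp
    qed
    then show "u \<in> Y" unfolding Y_def using uX by simp
  qed
  have cc: "(\<Sum>u\<in>Y. card (cent G K u)) * card (normK G K P) = card K * card V * card (centK G K P)"
    unfolding Yeq by (rule class_count[OF K PK VP V1 Vcl])
  then have sumY: "(\<Sum>u\<in>Y. card (cent G K u)) = card K * card V"
    using NC C0 by simp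
  have "p ^ a * (\<Sum>u\<in>Y. card (proots G (cent G K u) m)) = (\<Sum>u\<in>Y. card (cent G K u))"
    by (simp add: sum_distrib_left IHY)
  then have h1: "p ^ a * card K = card K * card V + p ^ a * (card Z * c)"
    using cK2 sumY by (simp add: algebra_simps)
  have h2: "int (card V) = int (p ^ a) - int (card Z)" using cardV cardZle by simp
  have "int (p ^ a) * int (card K) = int (card K) * int (card V) + int (p ^ a) * (int (card Z) * int c)"
    using h1 by (metis of_nat_add of_nat_mult)
  then have "int (card Z) * int (card K) = int (card Z) * (int (p ^ a) * int c)"
    unfolding h2 by (simp add: algebra_simps)
  moreover have "card Z > 0" using oneZ fZ card_gt_0_iff by blast
  ultimately have "int (card K) = int (p ^ a) * int c" by simp
  then have "card K = p ^ a * c" by (metis of_nat_eq_iff of_nat_mult)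
  then show ?case unfolding c_def by simp
qed

end

context cyc_sylow begin

lemma main_count:
  assumes s: "s \<le> a"
  shows "card {g \<in> carrier G. g [^] (m * p ^ s) \<noteq> \<one>} * p ^ a * card (normK G (carrier G) P)
         = order G * (p ^ a - p ^ s) * card (centK G (carrier G) P)"
proof -
  define K where "K = carrier G"
  have KS: "subgroup K G" unfolding K_def using subgroup_self .
  have PK: "P \<subseteq> K" unfolding K_def using Pc .
  define U where "U = {u \<in> K. u [^] (p ^ a) = \<one> \<and> u [^] (p ^ s) \<noteq> \<one>}"
  have e1: "{g \<in> carrier G. g [^] (m * p ^ s) \<noteq> \<one>} = {g \<in> K. pp g \<in> U}"
    unfolding U_def K_def using pow_mps_iff pp_pow pp_closed by auto
  have cnt: "card {g \<in> K. pp g \<in> U} = (\<Sum>u\<in>U. card (proots G (cent G K u) m))"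
    by (rule count_by_pp[OF KS]) (auto simp: U_def)
  have each: "p ^ a * card (proots G (cent G K u) m) = card (cent G K u)" if u: "u \<in> U" for u
  proof -
    have uK: "u \<in> K" and up: "u [^] (p ^ a) = \<one>" and us: "u [^] (p ^ s) \<noteq> \<one>" using u unfolding U_def by auto
    obtain g where g: "g \<in> K" "inv g \<otimes> u \<otimes> g \<in> P" using pelem_conj[OF KS PK uK up] by blast
    have gc: "g \<in> carrier G" and uc: "u \<in> carrier G" using g uK unfolding K_def by auto
    define v where "v = inv g \<otimes> u \<otimes> g"
    have vP: "v \<in> P" using g(2) v_def by simp
    have vc: "v \<in> carrier G" using vP Pc by auto
    have ve: "v = inv g \<otimes> u \<otimes> inv (inv g)" using v_def gc by simp
    have "v [^] (p ^ s) = inv g \<otimes> u [^] (p ^ s) \<otimes> inv (inv g)"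
      using conj_pow[of "inv g" u "p ^ s"] gc uc ve by simp
    then have "v [^] (p ^ s) \<noteq> \<one>" using conj_one_iff[of "inv g" "u [^] (p ^ s)"] gc uc us by simp
    then have v1: "v \<noteq> \<one>" by auto
    have uv: "u = g \<otimes> v \<otimes> inv g" using conj_cancel2[OF gc uc] v_def by simp
    define K' where "K' = cent G K v"
    have K': "subgroup K' G" unfolding K'_def using cent_subgroup[OF KS vc] .
    have PK': "P \<subseteq> K'" unfolding K'_def cent_def using PK P_comm vP by auto
    have vcen: "\<forall>k\<in>K'. k \<otimes> v = v \<otimes> k" unfolding K'_def cent_def by auto
    have vK: "v \<in> K" using vP PK by auto
    have "p ^ a * card (proots G K' m) = card K'" using central_count[OF K' PK' vP v1 vcen] .
    moreover have "card (proots G (cent G K u) m) = card (proots G K' m)"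
      unfolding K'_def using conj_card_cent(1)[OF KS vK g(1)] uv by simp
    moreover have "card (cent G K u) = card K'"
      unfolding K'_def using conj_card_cent(2)[OF KS vK g(1)] uv by simp
    ultimately show ?thesis by simp
  qed
  define V where "V = {v \<in> P. v [^] (p ^ s) \<noteq> \<one>}"
  have VP: "V \<subseteq> P" unfolding V_def by auto
  have V1: "\<one> \<notin> V" unfolding V_def by auto
  have Vcl: "k \<otimes> v \<otimes> inv k \<in> V" if v: "v \<in> V" and k: "k \<in> K" and kv: "k \<otimes> v \<otimes> inv k \<in> P" for v k
  proof -
    have kc: "k \<in> carrier G" using k unfolding K_def by auto
    have vc: "v \<in> carrier G" using v VP Pc by auto
    have "(k \<otimes> v \<otimes> inv k) [^] (p ^ s) = k \<otimes> v [^] (p ^ s) \<otimes> inv k" using conj_pow[OF kc vc] .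
    then have "(k \<otimes> v \<otimes> inv k) [^] (p ^ s) \<noteq> \<one>" using conj_one_iff[OF kc] vc v unfolding V_def by simp
    then show ?thesis unfolding V_def using kv by simp
  qed
  have Ueq: "U = {u \<in> K. ccl K u \<inter> V \<noteq> {}}"
  proof (rule Set.set_eqI, rule iffI)
    fix u assume u: "u \<in> U"
    have uK: "u \<in> K" and up: "u [^] (p ^ a) = \<one>" and us: "u [^] (p ^ s) \<noteq> \<one>" using u unfolding U_def by auto
    obtain g where g: "g \<in> K" "inv g \<otimes> u \<otimes> g \<in> P" using pelem_conj[OF KS PK uK up] by blast
    have gc: "g \<in> carrier G" and uc: "u \<in> carrier G" using g uK unfolding K_def by auto
    have ve: "inv g \<otimes> u \<otimes> g = inv g \<otimes> u \<otimes> inv (inv g)" using gc by simp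
    have "(inv g \<otimes> u \<otimes> inv (inv g)) [^] (p ^ s) = inv g \<otimes> u [^] (p ^ s) \<otimes> inv (inv g)"
      using conj_pow[of "inv g" u "p ^ s"] gc uc by simp
    then have "(inv g \<otimes> u \<otimes> g) [^] (p ^ s) \<noteq> \<one>"
      using conj_one_iff[of "inv g" "u [^] (p ^ s)"] gc uc us by simp
    then have "inv g \<otimes> u \<otimes> g \<in> V" unfolding V_def using g(2) by simp
    moreover have "inv g \<otimes> u \<otimes> g \<in> ccl K u" unfolding ccl_def
      using ve subgroup.m_inv_closed[OF KS g(1)] by force
    ultimately show "u \<in> {u \<in> K. ccl K u \<inter> V \<noteq> {}}" using uK by auto
  next
    fix u assume "u \<in> {u \<in> K. ccl K u \<inter> V \<noteq> {}}"
    then obtain w where u: "u \<in> K" and w: "w \<in> ccl K u" "w \<in> V" by auto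
    obtain k where k: "k \<in> K" "w = k \<otimes> u \<otimes> inv k" using w(1) unfolding ccl_def by auto
    have kc: "k \<in> carrier G" and uc: "u \<in> carrier G" using k u unfolding K_def by auto
    have wP: "w \<in> P" using w(2) unfolding V_def by auto
    have "(k \<otimes> u \<otimes> inv k) [^] (p ^ a) = \<one>" using P_pelem[OF wP] k(2) by simp
    then have "u [^] (p ^ a) = \<one>" using conj_pow[OF kc uc] conj_one_iff[OF kc] uc by simp
    moreover have "(k \<otimes> u \<otimes> inv k) [^] (p ^ s) \<noteq> \<one>" using w(2) k(2) unfolding V_def by simp
    then have "u [^] (p ^ s) \<noteq> \<one>" using conj_pow[OF kc uc] conj_one_iff[OF kc] uc by simp
    ultimately show "u \<in> U" unfolding U_def using u by simp
  qed
  have cc: "(\<Sum>u\<in>U. card (cent G K u)) * card (normK G K P) = card K * card V * card (centK G K P)"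
    unfolding Ueq by (rule class_count[OF KS PK VP V1 Vcl])
  have roots: "card {v \<in> P. v [^] (p ^ s) = \<one>} = p ^ s"
  proof -
    have "card {v \<in> P. v [^] (p ^ s) = \<one>} = gcd (ord y) (p ^ s)"
      using card_cyclic_roots[OF fin y, of "p ^ s"] Pgen by simp
    also have "\<dots> = p ^ s" using ord_y s by (simp add: le_imp_power_dvd gcd_nat.absorb2)
    finally show ?thesis .
  qed
  have cardV: "card V = p ^ a - p ^ s"
  proof -
    have "V = P - {v \<in> P. v [^] (p ^ s) = \<one>}" unfolding V_def by auto
    then show ?thesis using card_Diff_subset[of "{v \<in> P. v [^] (p ^ s) = \<one>}" P]
        finite_subset[OF Pc fin] roots Pcard by (simp add: finite_subset)
  qed
  have sp: "p ^ a * (\<Sum>u\<in>U. card (proots G (cent G K u) m)) = (\<Sum>u\<in>U. card (cent G K u))"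
    by (simp add: sum_distrib_left each)
  have "card {g \<in> carrier G. g [^] (m * p ^ s) \<noteq> \<one>} * p ^ a = (\<Sum>u\<in>U. card (cent G K u))"
    using e1 cnt sp by (simp add: mult.commute)
  then show ?thesis using cc cardV unfolding K_def by (simp add: order_def)
qed

end

context group begin

lemma conj_img_back:
  assumes h: "h \<in> carrier G" and Xz: "Xz \<subseteq> carrier G"
  shows "(\<lambda>s. inv h \<otimes> s \<otimes> inv (inv h)) ` ((\<lambda>s. h \<otimes> s \<otimes> inv h) ` Xz) = Xz"
    and "(\<lambda>s. h \<otimes> s \<otimes> inv h) ` ((\<lambda>s. inv h \<otimes> s \<otimes> inv (inv h)) ` Xz) = Xz"
proof -
  have "(\<lambda>s. inv h \<otimes> s \<otimes> inv (inv h)) ` ((\<lambda>s. h \<otimes> s \<otimes> inv h) ` Xz) = (\<lambda>s. s) ` Xz"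
    unfolding image_image by (rule image_cong) (use h Xz conj_cancel1 in auto)
  then show "(\<lambda>s. inv h \<otimes> s \<otimes> inv (inv h)) ` ((\<lambda>s. h \<otimes> s \<otimes> inv h) ` Xz) = Xz" by simp
  have "(\<lambda>s. h \<otimes> s \<otimes> inv h) ` ((\<lambda>s. inv h \<otimes> s \<otimes> inv (inv h)) ` Xz) = (\<lambda>s. s) ` Xz"
    unfolding image_image by (rule image_cong) (use h Xz conj_cancel2 in auto)
  then show "(\<lambda>s. h \<otimes> s \<otimes> inv h) ` ((\<lambda>s. inv h \<otimes> s \<otimes> inv (inv h)) ` Xz) = Xz" by simp
qed

lemma conj_img_comp:
  assumes h: "h \<in> carrier G" and k: "k \<in> carrier G" and Xz: "Xz \<subseteq> carrier G"
  shows "(\<lambda>s. (h \<otimes> k) \<otimes> s \<otimes> inv (h \<otimes> k)) ` Xz = (\<lambda>s. h \<otimes> s \<otimes> inv h) ` ((\<lambda>s. k \<otimes> s \<otimes> inv k) ` Xz)"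
  unfolding image_image by (rule image_cong) (use h k Xz conj_comp in auto)

lemma conj_img_crit:
  assumes h: "h \<in> carrier G" and h': "h' \<in> carrier G" and S: "S \<subseteq> carrier G"
  shows "((\<lambda>s. h \<otimes> s \<otimes> inv h) ` S = (\<lambda>s. h' \<otimes> s \<otimes> inv h') ` S)
         = ((\<lambda>s. (inv h \<otimes> h') \<otimes> s \<otimes> inv (inv h \<otimes> h')) ` S = S)"
proof -
  have ih: "inv h \<in> carrier G" using h by simp
  have S1: "(\<lambda>s. h' \<otimes> s \<otimes> inv h') ` S \<subseteq> carrier G" using S h' by auto
  have S2: "(\<lambda>s. h \<otimes> s \<otimes> inv h) ` S \<subseteq> carrier G" using S h by auto
  have e: "(\<lambda>s. (inv h \<otimes> h') \<otimes> s \<otimes> inv (inv h \<otimes> h')) ` S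
           = (\<lambda>s. inv h \<otimes> s \<otimes> inv (inv h)) ` ((\<lambda>s. h' \<otimes> s \<otimes> inv h') ` S)"
    using conj_img_comp[OF ih h' S] by simp
  show ?thesis
  proof
    assume eq: "(\<lambda>s. h \<otimes> s \<otimes> inv h) ` S = (\<lambda>s. h' \<otimes> s \<otimes> inv h') ` S"
    show "(\<lambda>s. (inv h \<otimes> h') \<otimes> s \<otimes> inv (inv h \<otimes> h')) ` S = S"
      unfolding e eq[symmetric] using conj_img_back(1)[OF h S] .
  next
    assume eq: "(\<lambda>s. (inv h \<otimes> h') \<otimes> s \<otimes> inv (inv h \<otimes> h')) ` S = S"
    have "(\<lambda>s. h \<otimes> s \<otimes> inv h) ` S = (\<lambda>s. h \<otimes> s \<otimes> inv h) ` ((\<lambda>s. inv h \<otimes> s \<otimes> inv (inv h)) ` ((\<lambda>s. h' \<otimes> s \<otimes> inv h') ` S))"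
      using eq e by simp
    also have "\<dots> = (\<lambda>s. h' \<otimes> s \<otimes> inv h') ` S" using conj_img_back(2)[OF h S1] .
    finally show "(\<lambda>s. h \<otimes> s \<otimes> inv h) ` S = (\<lambda>s. h' \<otimes> s \<otimes> inv h') ` S" .
  qed
qed

end

context cyc_sylow begin

lemma subgroup_of_P_char:
  assumes R: "subgroup R G" and RP: "R \<subseteq> P"
  shows "R = {x \<in> P. x [^] card R = \<one>}"
proof -
  have fP: "finite P" using finite_subset[OF Pc fin] .
  have Rdvd: "card R dvd p ^ a"
    using card_lcosets[OF fin R P RP] Pcard by (metis dvd_triv_right)
  have sub: "R \<subseteq> {x \<in> P. x [^] card R = \<one>}"
  proof
    fix x assume x: "x \<in> R"
    have xc: "x \<in> carrier G" using x subgroup.mem_carrier[OF R] by auto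
    have gs: "subgroup (generate G {x}) G" using generate_is_subgroup xc by auto
    have gR: "generate G {x} \<subseteq> R" using generate_subgroup_incl[OF _ R] x by auto
    have "card (generate G {x}) dvd card R"
      using card_lcosets[OF fin gs R gR] by (metis dvd_triv_right)
    then have "ord x dvd card R" using generate_pow_card[OF xc] by simp
    then show "x \<in> {x \<in> P. x [^] card R = \<one>}" using pow_eq_id[OF xc] x RP by auto
  qed
  have "card {x \<in> P. x [^] card R = \<one>} = gcd (ord y) (card R)"
    using card_cyclic_roots[OF fin y, of "card R"] Pgen by simp
  also have "\<dots> = card R" using ord_y Rdvd by (simp add: gcd_nat.absorb2)
  finally show ?thesis
    using card_subset_eq[OF finite_subset[OF _ fP] sub] by auto
qed

lemma normP_sub_normQ:
  assumes Q: "subgroup Q G" and QP: "Q \<subseteq> P"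
  shows "normK G (carrier G) P \<subseteq> normK G (carrier G) Q"
proof
  fix n assume n: "n \<in> normK G (carrier G) P"
  have nc: "n \<in> carrier G" using n unfolding normK_def by auto
  have Qc: "Q \<subseteq> carrier G" using QP Pc by auto
  define R where "R = (\<lambda>q. n \<otimes> q \<otimes> inv n) ` Q"
  have RS: "subgroup R G" unfolding R_def using conj_subgroup[OF Q nc] .
  have RP: "R \<subseteq> P" unfolding R_def using norm_conj_in[OF n] QP by auto
  have cR: "card R = card Q" unfolding R_def using card_conj_image[OF Qc nc] .
  have "R = Q" using subgroup_of_P_char[OF RS RP] subgroup_of_P_char[OF Q QP] cR by simp
  then show "n \<in> normK G (carrier G) Q" unfolding normK_def R_def using nc by simp
qed

lemma centralizer_ratio:
  assumes Q: "subgroup Q G" and QP: "Q \<subseteq> P" and Q1: "Q \<noteq> {\<one>}"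
  shows "card (centK G (carrier G) Q) * card (normK G (carrier G) P)
         = card (normK G (carrier G) Q) * card (centK G (carrier G) P)"
proof -
  define CQ where "CQ = centK G (carrier G) Q"
  define NQ where "NQ = normK G (carrier G) Q"
  define CP where "CP = centK G (carrier G) P"
  define NP where "NP = normK G (carrier G) P"
  define f where "f = (\<lambda>g. (\<lambda>s. g \<otimes> s \<otimes> inv g) ` P)"
  have Qc: "Q \<subseteq> carrier G" using QP Pc by auto
  have CQS: "subgroup CQ G" unfolding CQ_def using centK_subgroup[OF subgroup_self Qc] .
  have NQS: "subgroup NQ G" unfolding NQ_def using normK_subgroup[OF subgroup_self Qc] .
  have NPS: "subgroup NP G" unfolding NP_def using normK_subgroup[OF subgroup_self Pc] .
  have CPS: "subgroup CP G" unfolding CP_def using centK_subgroup[OF subgroup_self Pc] .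
  have fCQ: "finite CQ" using finite_subset[OF subgroup.subset[OF CQS] fin] .
  have fNQ: "finite NQ" using finite_subset[OF subgroup.subset[OF NQS] fin] .
  have CQNQ: "CQ \<subseteq> NQ"
  proof
    fix k assume k: "k \<in> CQ"
    then have kc: "k \<in> carrier G" unfolding CQ_def centK_def by auto
    have "(\<lambda>s. k \<otimes> s \<otimes> inv k) ` Q = (\<lambda>s. s) ` Q"
    proof (rule image_cong)
      fix s assume s: "s \<in> Q"
      have sc: "s \<in> carrier G" using s Qc by auto
      have "k \<otimes> s = s \<otimes> k" using k s unfolding CQ_def centK_def by auto
      then show "k \<otimes> s \<otimes> inv k = s" using iffD2[OF conj_commute_iff[OF kc sc]] by simp
    qed simp
    then show "k \<in> NQ" unfolding NQ_def normK_def using kc by simp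
  qed
  have PCQ: "P \<subseteq> CQ" unfolding CQ_def centK_def using Pc QP P_comm by auto
  have NPNQ: "NP \<subseteq> NQ" unfolding NP_def NQ_def using normP_sub_normQ[OF Q QP] .
  have CPNP: "CP \<subseteq> NP" unfolding CP_def NP_def using centK_sub_normK[OF subgroup_self] .
  have CPCQ: "CP \<subseteq> CQ" unfolding CP_def CQ_def centK_def using QP by auto
  obtain x where x: "x \<in> Q" "x \<noteq> \<one>" using Q1 subgroup.one_closed[OF Q] by blast
  have xP: "x \<in> P" using x QP by auto
  have orbs: "f ` NQ = f ` CQ"
  proof
    show "f ` CQ \<subseteq> f ` NQ" using CQNQ by auto
    show "f ` NQ \<subseteq> f ` CQ"
    proof
      fix Xz assume "Xz \<in> f ` NQ"
      then obtain n where n: "n \<in> NQ" "Xz = f n" by auto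
      have nc: "n \<in> carrier G" using n(1) subgroup.mem_carrier[OF NQS] by auto
      have nQ: "(\<lambda>s. n \<otimes> s \<otimes> inv n) ` Q = Q" using n(1) unfolding NQ_def normK_def by auto
      define Pn where "Pn = f n"
      have PnS: "subgroup Pn G" unfolding Pn_def f_def using conj_subgroup[OF P nc] .
      have cPn: "card Pn = p ^ a" unfolding Pn_def f_def using card_conj_image[OF Pc nc] Pcard by simp
      have PnCQ: "Pn \<subseteq> CQ"
      proof
        fix z assume "z \<in> Pn"
        then obtain q where q: "q \<in> P" "z = n \<otimes> q \<otimes> inv n" unfolding Pn_def f_def by auto
        have qc: "q \<in> carrier G" using q Pc by auto
        have "\<forall>t\<in>Q. z \<otimes> t = t \<otimes> z"
        proof
          fix t assume t: "t \<in> Q"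
          then have "t \<in> (\<lambda>s. n \<otimes> s \<otimes> inv n) ` Q" using nQ by simp
          then obtain t' where t': "t' \<in> Q" "t = n \<otimes> t' \<otimes> inv n" by auto
          have t'c: "t' \<in> carrier G" using t' Qc by auto
          have "z \<otimes> t = n \<otimes> (q \<otimes> t') \<otimes> inv n" using q(2) t'(2) conj_mult[OF nc qc t'c] by simp
          also have "q \<otimes> t' = t' \<otimes> q" using P_comm[OF q(1)] t' QP by auto
          also have "n \<otimes> (t' \<otimes> q) \<otimes> inv n = t \<otimes> z" using q(2) t'(2) conj_mult[OF nc t'c qc] by simp
          finally show "z \<otimes> t = t \<otimes> z" .
        qed
        then show "z \<in> CQ" unfolding CQ_def centK_def using q nc qc by simp
      qed
      obtain c where c: "c \<in> CQ" "\<forall>z\<in>Pn. inv c \<otimes> z \<otimes> c \<in> P"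
        using conj_into_P[OF CQS PCQ PnS PnCQ cPn] by blast
      have cc: "c \<in> carrier G" using c(1) subgroup.mem_carrier[OF CQS] by auto
      have Pnc: "Pn \<subseteq> carrier G" using subgroup.subset[OF PnS] .
      have "(\<lambda>z. inv c \<otimes> z \<otimes> c) ` Pn = P" using conj_full[OF Pnc cPn cc c(2)] .
      then have "(\<lambda>z. inv c \<otimes> z \<otimes> inv (inv c)) ` Pn = P" using cc by simp
      then have "f c = (\<lambda>s. c \<otimes> s \<otimes> inv c) ` ((\<lambda>z. inv c \<otimes> z \<otimes> inv (inv c)) ` Pn)" unfolding f_def by simp
      also have "\<dots> = Pn" using conj_img_back(2)[OF cc Pnc] .
      finally have "Xz = f c" using n(2) Pn_def by simp
      then show "Xz \<in> f ` CQ" using c(1) by auto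
    qed
  qed
  have crit0: "(f h = f h') = (inv h \<otimes> h' \<in> NP)" if "h \<in> carrier G" "h' \<in> carrier G" for h h'
  proof -
    have "(f h = f h') = ((\<lambda>s. (inv h \<otimes> h') \<otimes> s \<otimes> inv (inv h \<otimes> h')) ` P = P)"
      unfolding f_def using conj_img_crit[OF that Pc] .
    then show ?thesis unfolding NP_def normK_def using that by simp
  qed
  have o1: "card (f ` NQ) * card NP = card NQ"
  proof (rule orbit_stab_general[OF NQS fNQ NPNQ])
    fix h h' assume "h \<in> NQ" "h' \<in> NQ"
    then show "(f h = f h') = (inv h \<otimes> h' \<in> NP)" using crit0 subgroup.mem_carrier[OF NQS] by blast
  qed
  have o2: "card (f ` CQ) * card CP = card CQ"
  proof (rule orbit_stab_general[OF CQS fCQ CPCQ])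
    fix h h' assume hh: "h \<in> CQ" "h' \<in> CQ"
    have hc: "h \<in> carrier G" "h' \<in> carrier G" using hh subgroup.mem_carrier[OF CQS] by auto
    have kCQ: "inv h \<otimes> h' \<in> CQ" using subgroup.m_closed[OF CQS subgroup.m_inv_closed[OF CQS hh(1)] hh(2)] .
    have "(inv h \<otimes> h' \<in> NP) = (inv h \<otimes> h' \<in> CP)"
    proof
      assume kN: "inv h \<otimes> h' \<in> NP"
      have "inv h \<otimes> h' \<otimes> x = x \<otimes> (inv h \<otimes> h')" using kCQ x(1) unfolding CQ_def centK_def by auto
      then have "\<forall>q\<in>P. inv h \<otimes> h' \<otimes> q = q \<otimes> (inv h \<otimes> h')"
        using aut_trivial[OF _ xP x(2)] kN unfolding NP_def by blast
      then show "inv h \<otimes> h' \<in> CP" unfolding CP_def centK_def using hc by simp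
    next
      assume "inv h \<otimes> h' \<in> CP"
      then show "inv h \<otimes> h' \<in> NP" using CPNP by auto
    qed
    then show "(f h = f h') = (inv h \<otimes> h' \<in> CP)" using crit0[OF hc] by simp
  qed
  have "card CQ * card NP = card (f ` CQ) * card CP * card NP" using o2 by simp
  also have "\<dots> = card NQ * card CP" using o1 orbs by (simp add: ac_simps)
  finally show ?thesis unfolding CQ_def NP_def NQ_def CP_def .
qed

end

lemma gcd_decomp:
  fixes p n n' m k t :: nat
  assumes p: "Factorial_Ring.prime p" and n: "n = p ^ k * n'" and m: "\<not> p dvd m" and n'm: "n' dvd m"
  shows "gcd n (m * p ^ t) = n' * p ^ (min k t)"
proof -
  obtain m2 where m2: "m = n' * m2" using n'm by (auto simp: dvd_def)
  have pm2: "\<not> p dvd m2" using m m2 by auto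
  define d where "d = n' * p ^ (min k t)"
  have e1: "n = d * p ^ (k - min k t)" unfolding d_def n by (simp add: power_add[symmetric] ac_simps)
  have e2: "m * p ^ t = d * (m2 * p ^ (t - min k t))" unfolding d_def m2
    by (simp add: power_add[symmetric] ac_simps)
  have g1: "gcd (p ^ (k - min k t)) (m2 * p ^ (t - min k t)) = 1"
  proof (cases "k \<le> t")
    case True then show ?thesis by simp
  next
    case False
    then have "t - min k t = 0" by simp
    moreover have "coprime (p ^ (k - min k t)) m2" using prime_imp_coprime[OF p pm2] by simp
    ultimately show ?thesis by simp
  qed
  have "gcd n (m * p ^ t) = d * gcd (p ^ (k - min k t)) (m2 * p ^ (t - min k t))"
    unfolding e1 e2 by (simp add: gcd_mult_distrib_nat)
  then show ?thesis using g1 d_def by simp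
qed

lemma F_sum_nt:
  fixes p n n' k a :: nat
  assumes p1: "p > 1" and n: "n = p ^ k * n'" and ka: "k \<le> a"
  shows "(\<Sum>t<a. rat_of_nat n - rat_of_nat (n' * p ^ (min k t))) + (rat_of_nat n - rat_of_nat n') / (rat_of_nat p - 1)
         = rat_of_nat n * rat_of_nat k"
proof -
  have split: "{..<a} = {..<k} \<union> {k..<a}" using ka by auto
  have "(\<Sum>t<a. rat_of_nat n - rat_of_nat (n' * p ^ (min k t)))
        = (\<Sum>t<k. rat_of_nat n - rat_of_nat (n' * p ^ (min k t))) + (\<Sum>t\<in>{k..<a}. rat_of_nat n - rat_of_nat (n' * p ^ (min k t)))"
    unfolding split by (rule sum.union_disjoint) auto
  also have "(\<Sum>t\<in>{k..<a}. rat_of_nat n - rat_of_nat (n' * p ^ (min k t))) = 0"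
    by (rule sum.neutral) (auto simp: n mult.commute)
  also have "(\<Sum>t<k. rat_of_nat n - rat_of_nat (n' * p ^ (min k t))) = (\<Sum>t<k. of_nat n' * (of_nat p ^ k - of_nat p ^ t))"
    by (rule sum.cong) (auto simp: n algebra_simps)
  also have "\<dots> = of_nat n' * (of_nat k * of_nat p ^ k - (\<Sum>t<k. (of_nat p :: rat) ^ t))"
    by (simp add: sum_distrib_left sum_subtractf algebra_simps)
  also have "(\<Sum>t<k. (of_nat p :: rat) ^ t) = (of_nat p ^ k - 1) / (of_nat p - 1)"
    using p1 by (intro geometric_sum) simp
  finally have S: "(\<Sum>t<a. rat_of_nat n - rat_of_nat (n' * p ^ (min k t)))
      = of_nat n' * (of_nat k * of_nat p ^ k - (of_nat p ^ k - 1) / (of_nat p - 1))" by simp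
  define D where "D = ((of_nat p :: rat) ^ k - 1) / (of_nat p - 1)"
  have e: "(rat_of_nat n - rat_of_nat n') / (rat_of_nat p - 1) = of_nat n' * D"
    unfolding D_def n by (simp add: algebra_simps diff_divide_distrib)
  have "rat_of_nat n = of_nat n' * of_nat p ^ k" by (simp add: n)
  then show ?thesis unfolding S e D_def[symmetric] by (simp add: algebra_simps)
qed

context group begin

lemma lcoset_stab:
  assumes H: "subgroup H G" and x: "x \<in> carrier G"
  shows "{g \<in> carrier G. g <# (x <# H) = x <# H} = (\<lambda>h. x \<otimes> h \<otimes> inv x) ` H"
proof (rule Set.set_eqI, rule iffI)
  have Hc: "H \<subseteq> carrier G" using subgroup.subset[OF H] .
  fix g assume "g \<in> {g \<in> carrier G. g <# (x <# H) = x <# H}"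
  then have g: "g \<in> carrier G" "g <# (x <# H) = x <# H" by auto
  have "(g \<otimes> x) <# H = x <# H" using g lcos_assoc'[OF Hc g(1) x] by simp
  then have "inv x \<otimes> (g \<otimes> x) \<in> H" using lcoset_eq_iff[OF H x] g(1) x by (metis m_closed)
  moreover have "g = x \<otimes> (inv x \<otimes> (g \<otimes> x)) \<otimes> inv x" using g(1) x by (simp add: m_assoc)
  ultimately show "g \<in> (\<lambda>h. x \<otimes> h \<otimes> inv x) ` H" by blast
next
  have Hc: "H \<subseteq> carrier G" using subgroup.subset[OF H] .
  fix g assume "g \<in> (\<lambda>h. x \<otimes> h \<otimes> inv x) ` H"
  then obtain h where h: "h \<in> H" "g = x \<otimes> h \<otimes> inv x" by auto
  have hc: "h \<in> carrier G" using h Hc by auto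
  have gc: "g \<in> carrier G" using h(2) hc x by simp
  have "inv x \<otimes> (g \<otimes> x) = h" using h(2) hc x by (simp add: m_assoc)
  then have "x <# H = (g \<otimes> x) <# H" using lcoset_eq_iff[OF H x] gc x h(1) by (metis m_closed)
  then have "g <# (x <# H) = x <# H" using lcos_assoc'[OF Hc gc x] by simp
  then show "g \<in> {g \<in> carrier G. g <# (x <# H) = x <# H}" using gc by simp
qed

lemma perm_char_sum:
  fixes f :: "'a \<Rightarrow> rat"
  assumes fin: "finite (carrier G)" and H: "subgroup H G"
    and cf: "\<And>x g. x \<in> carrier G \<Longrightarrow> g \<in> carrier G \<Longrightarrow> f (x \<otimes> g \<otimes> inv x) = f g"
  shows "(\<Sum>g\<in>carrier G. of_nat (perm_char G H g) * f g) = of_nat (card (left_cosets G H)) * (\<Sum>h\<in>H. f h)"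
proof -
  define LC where "LC = left_cosets G H"
  have LCe: "LC = (\<lambda>x. x <# H) ` carrier G" unfolding LC_def left_cosets_def by auto
  have fLC: "finite LC" unfolding LCe using fin by simp
  have Hc: "H \<subseteq> carrier G" using subgroup.subset[OF H] .
  have "(\<Sum>g\<in>carrier G. of_nat (perm_char G H g) * f g)
        = (\<Sum>g\<in>carrier G. \<Sum>C\<in>{C \<in> LC. g <# C = C}. f g)"
    unfolding perm_char_def LC_def by simp
  also have "\<dots> = (\<Sum>C\<in>LC. \<Sum>g\<in>{g \<in> carrier G. g <# C = C}. f g)"
    by (rule sum.swap_restrict[OF fin fLC])
  also have "\<dots> = (\<Sum>C\<in>LC. \<Sum>h\<in>H. f h)"
  proof (rule sum.cong[OF refl])
    fix C assume "C \<in> LC"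
    then obtain x where x: "x \<in> carrier G" "C = x <# H" unfolding LCe by auto
    have "(\<Sum>g\<in>{g \<in> carrier G. g <# C = C}. f g) = (\<Sum>g\<in>(\<lambda>h. x \<otimes> h \<otimes> inv x) ` H. f g)"
      using lcoset_stab[OF H x(1)] x(2) by simp
    also have "\<dots> = (\<Sum>h\<in>H. f (x \<otimes> h \<otimes> inv x))"
      by (rule sum.reindex[unfolded comp_def]) (rule inj_on_subset[OF conj_inj[OF x(1)] Hc])
    also have "\<dots> = (\<Sum>h\<in>H. f h)" by (rule sum.cong) (use cf x(1) Hc in auto)
    finally show "(\<Sum>g\<in>{g \<in> carrier G. g <# C = C}. f g) = (\<Sum>h\<in>H. f h)" .
  qed
  also have "\<dots> = of_nat (card LC) * (\<Sum>h\<in>H. f h)" by simp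
  finally show ?thesis unfolding LC_def .
qed

lemma card_left_cosets:
  assumes fin: "finite (carrier G)" and H: "subgroup H G"
  shows "card (left_cosets G H) * card H = order G"
proof -
  have "left_cosets G H = (\<lambda>x. x <# H) ` carrier G" unfolding left_cosets_def by auto
  then show ?thesis using card_lcosets[OF fin H subgroup_self subgroup.subset[OF H]]
    unfolding order_def by simp
qed

end

lemma ind_sum_card:
  assumes "finite S"
  shows "(\<Sum>h\<in>S. if P h then (1::rat) else 0) = of_nat (card {h \<in> S. P h})"
  using sum.inter_filter[OF assms, of "\<lambda>_. (1::rat)" P] by simp

context cyc_sylow begin

definition "Ff g = (\<Sum>t<a. if g [^] (m * p ^ t) \<noteq> \<one> then (1::rat) else 0)
                   + (if g [^] m \<noteq> \<one> then 1 else 0) / (of_nat p - 1)"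

lemma Ff_class:
  assumes x: "x \<in> carrier G" and g: "g \<in> carrier G"
  shows "Ff (x \<otimes> g \<otimes> inv x) = Ff g"
proof -
  have e: "((x \<otimes> g \<otimes> inv x) [^] (M::nat) = \<one>) = (g [^] M = \<one>)" for M
    using conj_pow[OF x g, of M] conj_one_iff[OF x] g by simp
  show ?thesis unfolding Ff_def e ..
qed

lemma Ff_sum_split:
  assumes S: "finite S"
  shows "(\<Sum>g\<in>S. Ff g) = (\<Sum>t<a. of_nat (card {g \<in> S. g [^] (m * p ^ t) \<noteq> \<one>}))
                          + of_nat (card {g \<in> S. g [^] m \<noteq> \<one>}) / (of_nat p - 1)"
proof -
  have "(\<Sum>g\<in>S. Ff g) = (\<Sum>t<a. \<Sum>g\<in>S. if g [^] (m * p ^ t) \<noteq> \<one> then (1::rat) else 0)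
        + (\<Sum>g\<in>S. if g [^] m \<noteq> \<one> then (1::rat) else 0) / (of_nat p - 1)"
    unfolding Ff_def by (simp add: sum.distrib sum_divide_distrib sum.swap[of _ S])
  then show ?thesis using ind_sum_card[OF S] by simp
qed

lemma Ff_cyc:
  assumes g0: "g0 \<in> carrier G"
  shows "(\<Sum>h\<in>generate G {g0}. Ff h)
         = of_nat (card (generate G {g0})) * of_nat (multiplicity p (card (generate G {g0})))"
proof -
  define H where "H = generate G {g0}"
  define n where "n = card H"
  have Hs: "subgroup H G" unfolding H_def using generate_is_subgroup g0 by auto
  have fH: "finite H" using finite_subset[OF subgroup.subset[OF Hs] fin] .
  have nord: "n = ord g0" unfolding n_def H_def using generate_pow_card[OF g0] by simp
  have n0: "n > 0" unfolding nord using ord_ge_1[OF fin g0] by simp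
  have ndvd: "n dvd p ^ a * m" using card_sub_dvd[OF Hs] ordG n_def by simp
  define k where "k = multiplicity p n"
  have nu: "\<not> is_unit p" using p_gt1 by simp
  obtain n' where n': "n = p ^ k * n'" "\<not> p dvd n'"
    using multiplicity_decompose'[of n p] n0 nu unfolding k_def by auto
  have cop: "coprime n' (p ^ a)" using prime_imp_coprime[OF p n'(2)] by (simp add: coprime_commute)
  have "n' dvd p ^ a * m" using ndvd n'(1) by (metis dvd_mult_right mult.commute)
  then have n'm: "n' dvd m" using cop by (simp add: coprime_dvd_mult_right_iff)
  have copm: "coprime (p ^ k) m" using prime_imp_coprime[OF p ndvd_m] by simp
  have "p ^ k dvd p ^ a * m" using ndvd n'(1) by (metis dvd_mult_left)
  then have "p ^ k dvd p ^ a" using copm by (simp add: coprime_dvd_mult_left_iff)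
  then have ka: "k \<le> a" using p_gt1 power_dvd_imp_le by blast
  have cnt: "of_nat (card {h \<in> H. h [^] M \<noteq> \<one>}) = rat_of_nat n - of_nat (gcd n M)" for M
  proof -
    have "{h \<in> H. h [^] M \<noteq> \<one>} = H - {h \<in> H. h [^] M = \<one>}" by auto
    moreover have "card {h \<in> H. h [^] M = \<one>} = gcd n M"
      unfolding H_def using card_cyclic_roots[OF fin g0] nord by simp
    moreover have "gcd n M \<le> n" using n0 by simp
    ultimately have "card {h \<in> H. h [^] M \<noteq> \<one>} = n - gcd n M"
      using card_Diff_subset[of "{h \<in> H. h [^] M = \<one>}" H] fH n_def by (simp add: finite_subset)
    then show ?thesis using \<open>gcd n M \<le> n\<close> by simp
  qed
  have gt: "gcd n (m * p ^ t) = n' * p ^ (min k t)" for t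
    using gcd_decomp[OF p n'(1) ndvd_m n'm] .
  have g0': "gcd n m = n'" using gt[of 0] by simp
  have "(\<Sum>h\<in>H. Ff h) = (\<Sum>t<a. rat_of_nat n - rat_of_nat (n' * p ^ (min k t)))
           + (rat_of_nat n - rat_of_nat n') / (rat_of_nat p - 1)"
    unfolding Ff_sum_split[OF fH] cnt gt g0' by simp
  also have "\<dots> = rat_of_nat n * rat_of_nat k" using F_sum_nt[OF p_gt1 n'(1) ka] .
  finally show ?thesis unfolding H_def n_def k_def .
qed

lemma Ff_total:
  shows "(\<Sum>g\<in>carrier G. Ff g) * of_nat (card (normK G (carrier G) P))
         = of_nat (order G) * of_nat a * of_nat (card (centK G (carrier G) P))"
proof -
  define N where "N = card (normK G (carrier G) P)"
  define C where "C = card (centK G (carrier G) P)"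
  define Og where "Og = order G"
  have NS: "subgroup (normK G (carrier G) P) G" using normK_subgroup[OF subgroup_self Pc] .
  have N0: "N > 0" unfolding N_def
    using subgroup.one_closed[OF NS] finite_subset[OF subgroup.subset[OF NS] fin] card_gt_0_iff by blast
  have pa0: "(of_nat p :: rat) ^ a \<noteq> 0" using p_gt1 by simp
  have pm: "(of_nat p :: rat) - 1 \<noteq> 0" using p_gt1 by simp
  have cnt: "rat_of_nat (card {g \<in> carrier G. g [^] (m * p ^ t) \<noteq> \<one>})
             = of_nat Og * of_nat C / of_nat N * (1 - of_nat p ^ t / of_nat p ^ a)" if "t \<le> a" for t
  proof -
    have "card {g \<in> carrier G. g [^] (m * p ^ t) \<noteq> \<one>} * p ^ a * N = Og * (p ^ a - p ^ t) * C"
      using main_count[OF that] unfolding N_def C_def Og_def .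
    then have e0: "rat_of_nat (card {g \<in> carrier G. g [^] (m * p ^ t) \<noteq> \<one>} * p ^ a * N)
               = rat_of_nat (Og * (p ^ a - p ^ t) * C)" by (simp only:)
    have le: "p ^ t \<le> p ^ a" using power_increasing[OF that, of p] p_gt1 by simp
    have "rat_of_nat (p ^ a - p ^ t) = of_nat p ^ a - of_nat p ^ t" using of_nat_diff[OF le] by simp
    then have "rat_of_nat (card {g \<in> carrier G. g [^] (m * p ^ t) \<noteq> \<one>}) * of_nat p ^ a * of_nat N
               = of_nat Og * (of_nat p ^ a - of_nat p ^ t) * of_nat C"
      using e0 by (simp only: of_nat_mult of_nat_power)
    then show ?thesis using N0 pa0 by (simp add: field_simps)
  qed
  have cnt0: "rat_of_nat (card {g \<in> carrier G. g [^] m \<noteq> \<one>})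
             = of_nat Og * of_nat C / of_nat N * (1 - 1 / of_nat p ^ a)"
    using cnt[of 0] by simp
  define W where "W = (of_nat Og * of_nat C / of_nat N :: rat)"
  have "(\<Sum>g\<in>carrier G. Ff g) = (\<Sum>t<a. W * (1 - of_nat p ^ t / of_nat p ^ a)) + W * (1 - 1 / of_nat p ^ a) / (of_nat p - 1)"
    unfolding Ff_sum_split[OF fin] cnt0 W_def using cnt by simp
  also have "(\<Sum>t<a. W * (1 - of_nat p ^ t / of_nat p ^ a)) = W * (of_nat a - (\<Sum>t<a. (of_nat p :: rat) ^ t) / of_nat p ^ a)"
    by (simp add: sum_distrib_left sum_subtractf sum_divide_distrib algebra_simps)
  also have "(\<Sum>t<a. (of_nat p :: rat) ^ t) = (of_nat p ^ a - 1) / (of_nat p - 1)"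
    using p_gt1 by (intro geometric_sum) simp
  also have "W * (of_nat a - (of_nat p ^ a - 1) / (of_nat p - 1) / of_nat p ^ a) + W * (1 - 1 / of_nat p ^ a) / (of_nat p - 1)
             = W * of_nat a"
  proof -
    define D where "D = ((of_nat p :: rat) ^ a - 1) / (of_nat p - 1) / of_nat p ^ a"
    have "(1 - 1 / (of_nat p :: rat) ^ a) / (of_nat p - 1) = D"
      unfolding D_def using pa0 pm by (simp add: field_simps)
    then have "W * (1 - 1 / of_nat p ^ a) / (of_nat p - 1) = W * D" by (simp add: times_divide_eq_right[symmetric])
    then show ?thesis unfolding D_def[symmetric] by (simp add: algebra_simps)
  qed
  finally show ?thesis unfolding W_def N_def C_def Og_def using N0[unfolded N_def] by (simp add: field_simps)
qed

lemma artin_sum: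
  assumes A: "artin_coeffs G R \<alpha>"
  shows "(\<Sum>H\<in>R. \<alpha> H * of_nat (multiplicity p (card H))) * of_nat (card (normK G (carrier G) P))
         = of_nat a * of_nat (card (centK G (carrier G) P))"
proof -
  have cyc: "\<forall>H\<in>R. cyclic_subgroup G H" and ident: "\<forall>g\<in>carrier G. (1::rat) = (\<Sum>H\<in>R. \<alpha> H * of_nat (perm_char G H g))"
    using A unfolding artin_coeffs_def cyclic_reps_def by auto
  have Rsub: "R \<subseteq> Pow (carrier G)"
  proof
    fix H assume "H \<in> R"
    then obtain g where g: "g \<in> carrier G" "H = generate G {g}" using cyc unfolding cyclic_subgroup_def by auto
    then show "H \<in> Pow (carrier G)" using generate_is_subgroup[of "{g}"] subgroup.subset by auto
  qed
  have fR: "finite R" using finite_subset[OF Rsub] fin by simp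
  have O0: "order G > 0" using fin order_gt_0_iff_finite by blast
  have "(\<Sum>g\<in>carrier G. Ff g) = (\<Sum>g\<in>carrier G. (\<Sum>H\<in>R. \<alpha> H * of_nat (perm_char G H g)) * Ff g)"
    using ident by (intro sum.cong) auto
  also have "\<dots> = (\<Sum>H\<in>R. \<alpha> H * (\<Sum>g\<in>carrier G. of_nat (perm_char G H g) * Ff g))"
    by (simp add: sum_distrib_right sum_distrib_left sum.swap[of _ "carrier G"] mult.assoc)
  also have "\<dots> = (\<Sum>H\<in>R. \<alpha> H * (of_nat (order G) * of_nat (multiplicity p (card H))))"
  proof (rule sum.cong[OF refl])
    fix H assume "H \<in> R"
    then obtain g where g: "g \<in> carrier G" "H = generate G {g}" using cyc unfolding cyclic_subgroup_def by auto
    have Hs: "subgroup H G" using g generate_is_subgroup by auto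
    have "(\<Sum>g\<in>carrier G. of_nat (perm_char G H g) * Ff g) = of_nat (card (left_cosets G H)) * (\<Sum>h\<in>H. Ff h)"
      using perm_char_sum[OF fin Hs] Ff_class by blast
    also have "\<dots> = of_nat (card (left_cosets G H)) * (of_nat (card H) * of_nat (multiplicity p (card H)))"
      using Ff_cyc[OF g(1)] g(2) by simp
    also have "\<dots> = of_nat (order G) * of_nat (multiplicity p (card H))"
      using card_left_cosets[OF fin Hs] by (metis (mono_tags, lifting) mult.assoc of_nat_mult)
    finally show "\<alpha> H * (\<Sum>g\<in>carrier G. of_nat (perm_char G H g) * Ff g) = \<alpha> H * (of_nat (order G) * of_nat (multiplicity p (card H)))"
      by simp
  qed
  also have "\<dots> = of_nat (order G) * (\<Sum>H\<in>R. \<alpha> H * of_nat (multiplicity p (card H)))"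
    by (simp add: sum_distrib_left algebra_simps)
  finally have e: "(\<Sum>g\<in>carrier G. Ff g) = of_nat (order G) * (\<Sum>H\<in>R. \<alpha> H * of_nat (multiplicity p (card H)))" .
  have "of_nat (order G) * ((\<Sum>H\<in>R. \<alpha> H * of_nat (multiplicity p (card H))) * of_nat (card (normK G (carrier G) P)))
        = of_nat (order G) * (of_nat a * of_nat (card (centK G (carrier G) P)))"
    using Ff_total e by (simp add: algebra_simps)
  then show ?thesis using O0 by simp
qed

end

lemma normalizer_eq:
  assumes "group G" and "Q \<subseteq> carrier G"
  shows "normalizer G Q = normK G (carrier G) Q"
proof -
  have e: "g <#\<^bsub>G\<^esub> Q #>\<^bsub>G\<^esub> inv\<^bsub>G\<^esub> g = (\<lambda>q. g \<otimes>\<^bsub>G\<^esub> q \<otimes>\<^bsub>G\<^esub> inv\<^bsub>G\<^esub> g) ` Q" for g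
    unfolding l_coset_def r_coset_def by auto
  show ?thesis unfolding normalizer_def stabilizer_def normK_def using assms(2) e by auto
qed

lemma centralizer_eq: "centralizer G Q = centK G (carrier G) Q"
  unfolding centralizer_def centK_def by auto

theorem corollary5p11:
  fixes G (structure) and p r :: nat
  assumes "group G" and "finite (carrier G)" and "Factorial_Ring.prime p"
    and "\<forall>P. sylow_subgroup G p P \<longrightarrow> cyclic_subgroup G P \<and> card P = p ^ r"
  shows "\<forall>R \<alpha>. artin_coeffs G R \<alpha> \<longrightarrow>
           (r \<ge> 1 \<longrightarrow> (\<forall>Q. p_subgroup G p Q \<and> Q \<noteq> {\<one>} \<longrightarrow>
               artin_reg_val G p R \<alpha> =
                 - of_nat r * (1 - of_nat (card (centralizer G Q)) / of_nat (card (normalizer G Q)))))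
         \<and> (r = 0 \<longrightarrow> artin_reg_val G p R \<alpha> = 0)"
proof -
  interpret group G by (rule assms(1))
  have fin: "finite (carrier G)" using assms(2) .
  have p: "Factorial_Ring.prime p" using assms(3) .
  have hyp: "\<And>P. sylow_subgroup G p P \<Longrightarrow> cyclic_subgroup G P \<and> card P = p ^ r" using assms(4) by blast
  have p1: "p > 1" using p prime_gt_1_nat by blast
  have nu: "\<not> is_unit p" using p1 by simp
  have O0: "order G \<noteq> 0" using fin order_gt_0_iff_finite by auto
  define a where "a = multiplicity p (order G)"
  obtain m where ordG: "order G = p ^ a * m" and ndvd: "\<not> p dvd m"
    using multiplicity_decompose'[of "order G" p] O0 nu unfolding a_def by auto
  have "sylow G p a m" unfolding sylow_eq sylow_axioms_def using assms(1) p ordG fin by simp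
  then obtain P0 where P0: "subgroup P0 G" "card P0 = p ^ a" using sylow.sylow_thm by blast
  have "sylow_subgroup G p P0" unfolding sylow_subgroup_def using P0 a_def by simp
  then have cP0: "cyclic_subgroup G P0" and "card P0 = p ^ r" using hyp by auto
  then have "p ^ a = p ^ r" using P0 by simp
  then have ar: "a = r" using p1 by (simp add: power_inject_exp)
  obtain y0 where y0: "y0 \<in> carrier G" "P0 = generate G {y0}" using cP0 unfolding cyclic_subgroup_def by auto
  interpret C0: cyc_sylow G p a m P0 y0
    by (rule cyc_sylow.intro[OF assms(1) cyc_sylow_axioms.intro[OF fin p ordG ndvd P0(1) P0(2) y0(1) y0(2)]])
  show ?thesis
  proof (intro allI impI)
    fix R \<alpha> assume A: "artin_coeffs G R \<alpha>"
    have cyc: "\<forall>H\<in>R. cyclic_subgroup G H" using A unfolding artin_coeffs_def cyclic_reps_def by auto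
    {
      assume r0: "r = 0"
      have a0: "a = 0" using ar r0 by simp
      have npG: "\<not> p dvd order G" using a0 unfolding a_def using multiplicity_eq_zero_iff[of "order G" p] O0 nu by simp
      have "multiplicity p (card H) = 0" if HR: "H \<in> R" for H
      proof -
        obtain g where g: "g \<in> carrier G" "H = generate G {g}" using cyc HR unfolding cyclic_subgroup_def by auto
        have Hs: "subgroup H G" using g generate_is_subgroup by auto
        have "card H dvd order G" using C0.card_sub_dvd[OF Hs] .
        then have "\<not> p dvd card H" using npG dvd_trans by blast
        then show ?thesis by (rule not_dvd_imp_multiplicity_0)
      qed
      then have "(\<Sum>H\<in>R. \<alpha> H * of_nat (multiplicity p (card H))) = 0" by simp
      then have "artin_reg_val G p R \<alpha> = 0" unfolding artin_reg_val_def using a0 a_def by simp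
    }
    note part2 = this
    {
      assume r1: "r \<ge> 1"
      have "\<forall>Q. p_subgroup G p Q \<and> Q \<noteq> {\<one>} \<longrightarrow>
               artin_reg_val G p R \<alpha> =
                 - of_nat r * (1 - of_nat (card (centralizer G Q)) / of_nat (card (normalizer G Q)))"
      proof (intro allI impI)
        fix Q assume "p_subgroup G p Q \<and> Q \<noteq> {\<one>}"
        then obtain k where Q: "subgroup Q G" and cQ: "card Q = p ^ k" and Q1: "Q \<noteq> {\<one>}"
          unfolding p_subgroup_def by auto
        have Qc: "Q \<subseteq> carrier G" using subgroup.subset[OF Q] .
        obtain g where g: "g \<in> carrier G" "\<forall>q\<in>Q. inv g \<otimes> q \<otimes> g \<in> P0"
          using C0.conj_into_P[OF subgroup_self C0.Pc Q Qc cQ] by blast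
        define P' where "P' = (\<lambda>x. g \<otimes> x \<otimes> inv g) ` P0"
        have P'S: "subgroup P' G" unfolding P'_def using conj_subgroup[OF P0(1) g(1)] .
        have cP': "card P' = p ^ a" unfolding P'_def using card_conj_image[OF C0.Pc g(1)] P0 by simp
        have QP': "Q \<subseteq> P'"
        proof
          fix q assume q: "q \<in> Q"
          have qc: "q \<in> carrier G" using q Qc by auto
          have "q = g \<otimes> (inv g \<otimes> q \<otimes> g) \<otimes> inv g" using conj_cancel2[OF g(1) qc] by simp
          then show "q \<in> P'" unfolding P'_def using g(2) q by blast
        qed
        have "sylow_subgroup G p P'" unfolding sylow_subgroup_def using P'S cP' a_def by simp
        then have "cyclic_subgroup G P'" using hyp by auto
        then obtain y' where y': "y' \<in> carrier G" "P' = generate G {y'}" unfolding cyclic_subgroup_def by auto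
        interpret C1: cyc_sylow G p a m P' y'
          by (rule cyc_sylow.intro[OF assms(1) cyc_sylow_axioms.intro[OF fin p ordG ndvd P'S cP' y'(1) y'(2)]])
        define CQ where "CQ = card (centK G (carrier G) Q)"
        define NQ where "NQ = card (normK G (carrier G) Q)"
        define CP where "CP = card (centK G (carrier G) P')"
        define NP where "NP = card (normK G (carrier G) P')"
        define S where "S = (\<Sum>H\<in>R. \<alpha> H * of_nat (multiplicity p (card H)))"
        have ratio: "CQ * NP = NQ * CP" unfolding CQ_def NP_def NQ_def CP_def
          using C1.centralizer_ratio[OF Q QP' Q1] .
        have sumS: "S * of_nat NP = of_nat a * of_nat CP" unfolding S_def NP_def CP_def
          using C1.artin_sum[OF A] .
        have NPS: "subgroup (normK G (carrier G) P') G" using normK_subgroup[OF subgroup_self C1.Pc] .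
        have NP0: "NP > 0" unfolding NP_def
          using subgroup.one_closed[OF NPS] finite_subset[OF subgroup.subset[OF NPS] fin] card_gt_0_iff by blast
        have NQS: "subgroup (normK G (carrier G) Q) G" using normK_subgroup[OF subgroup_self Qc] .
        have NQ0: "NQ > 0" unfolding NQ_def
          using subgroup.one_closed[OF NQS] finite_subset[OF subgroup.subset[OF NQS] fin] card_gt_0_iff by blast
        have S_eq: "S = of_nat a * of_nat CP / of_nat NP" using sumS NP0 by (simp add: field_simps)
        have "rat_of_nat CQ * of_nat NP = of_nat NQ * of_nat CP" using ratio by (metis of_nat_mult)
        then have rr: "rat_of_nat CP / of_nat NP = of_nat CQ / of_nat NQ" using NP0 NQ0 by (simp add: field_simps)
        have "artin_reg_val G p R \<alpha> = - (of_nat a - S)" unfolding artin_reg_val_def S_def a_def by simp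
        also have "\<dots> = - of_nat a * (1 - of_nat CP / of_nat NP)" using S_eq by (simp add: algebra_simps)
        also have "\<dots> = - of_nat r * (1 - of_nat CQ / of_nat NQ)" using rr ar by simp
        finally show "artin_reg_val G p R \<alpha> =
                 - of_nat r * (1 - of_nat (card (centralizer G Q)) / of_nat (card (normalizer G Q)))"
          unfolding CQ_def NQ_def centralizer_eq normalizer_eq[OF assms(1) Qc] .
      qed
    }
    note part1 = this
    show "(r \<ge> 1 \<longrightarrow> (\<forall>Q. p_subgroup G p Q \<and> Q \<noteq> {\<one>} \<longrightarrow>
               artin_reg_val G p R \<alpha> =
                 - of_nat r * (1 - of_nat (card (centralizer G Q)) / of_nat (card (normalizer G Q)))))
         \<and> (r = 0 \<longrightarrow> artin_reg_val G p R \<alpha> = 0)"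
      using part1 part2 by blast
  qed
qed


end
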